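(* Under the pairwise setting and assumptions described in the context, for every $\boldsymbol{\theta}$ in the interior of $\Theta$, the total gradient of $F(\boldsymbol{\theta})=\mathcal{J}(\boldsymbol{\theta},\boldsymbol{\phi}^*(\boldsymbol{\theta}))$ equals the standard (KL-regularized) policy gradient with the reward replaced by the implicit effective reward \[ \tilde{r}_{\boldsymbol{\theta},BT}(x,y)=r_{\boldsymbol{\phi}^*(\boldsymbol{\theta})}(x,y)+\mathbb{E}_{y'\sim\pi_{\rm ref}(\cdot|x)}\big[\langle\bar{\mathbf{g}}_r(\boldsymbol{\theta}),\mathcal{I}^{\boldsymbol{\theta}}_{BT}(x,y,y')\rangle\big], \] that is, $\nabla_{\boldsymbol{\theta}}F(\boldsymbol{\theta})=\mathbb{E}_{x\sim P_{\mathcal{X}},\,y\sim\pi_{\boldsymbol{\theta}}(\cdot|x)}\big[\tilde{r}_{\boldsymbol{\theta},BT}(x,y)\nabla_{\boldsymbol{\theta}}\log\pi_{\boldsymbol{\theta}}(y|x)\big]-\beta\nabla_{\boldsymbol{\theta}}\mathbb{E}_{x\sim P_{\mathcal{X}}}\big[D_{KL}(\pi_{\boldsymbol{\theta}}(\cdot|x)\,\|\,\pi_{\rm ref}(\cdot|x))\big]$.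
   Context: Let $\mathcal{X}$ (prompts) and $\mathcal{Y}$ (responses) be spaces with $\mathcal{X}\times\mathcal{Y}$ compact, and $P_{\mathcal{X}}$ a probability distribution on $\mathcal{X}$. For $\boldsymbol{\theta}\in\Theta\subseteq\mathbb{R}^{d_{\boldsymbol{\theta}}}$ ($\Theta$ compact), $\pi_{\boldsymbol{\theta}}(\cdot|x)$ is a probability density on $\mathcal{Y}$, twice continuously differentiable in $\boldsymbol{\theta}$ for every $(x,y)$, with $\pi_{\boldsymbol{\theta}}(y|x)>0$; $\pi_{\rm ref}(\cdot|x)$ is a fixed reference policy (not depending on $\boldsymbol{\theta}$) and $\beta>0$. Reward $r_{\boldsymbol{\phi}}(x,y)$, $\boldsymbol{\phi}\in\mathbb{R}^{d_{\boldsymbol{\phi}}}$, is $C^2$ in $\boldsymbol{\phi}$; $\Omega$ is a $C^2$ regularizer. Leader objective: $\mathcal{J}(\boldsymbol{\theta},\boldsymbol{\phi})=\mathbb{E}_{x\sim P_{\mathcal{X}}}\big[\mathbb{E}_{y\sim\pi_{\boldsymbol{\theta}}(\cdot|x)}[r_{\boldsymbol{\phi}}(x,y)]-\beta D_{KL}(\pi_{\boldsymbol{\theta}}(\cdot|x)\,\|\,\pi_{\rm ref}(\cdot|x))\big]$. Let $P^*(y\succ y'|x)\in[0,1]$ be ground-truth preference probabilities with $P^*(y'\succ y|x)=1-P^*(y\succ y'|x)$, and $P_{\boldsymbol{\phi}}(y\succ y'|x)=\sigma(r_{\boldsymbol{\phi}}(x,y)-r_{\boldsymbol{\phi}}(x,y'))$,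 $\sigma(t)=(1+e^{-t})^{-1}$. Per-pair Bradley–Terry loss: $\ell_{BT}(x,y,y';\boldsymbol{\phi})=-P^*(y\succ y'|x)\log P_{\boldsymbol{\phi}}(y\succ y'|x)-P^*(y'\succ y|x)\log P_{\boldsymbol{\phi}}(y'\succ y|x)$. Follower loss: $\mathcal{L}_{BT}(\boldsymbol{\theta},\boldsymbol{\phi})=\mathbb{E}_{x\sim P_{\mathcal{X}},\,y\sim\pi_{\boldsymbol{\theta}}(\cdot|x),\,y'\sim\pi_{\rm ref}(\cdot|x)}[\ell_{BT}(x,y,y';\boldsymbol{\phi})]+\Omega(\boldsymbol{\phi})$, assumed strongly convex in $\boldsymbol{\phi}$ for every $\boldsymbol{\theta}$, with unique minimizer $\boldsymbol{\phi}^*(\boldsymbol{\theta})$. Pairwise influence function: $\mathcal{I}^{\boldsymbol{\theta}}_{BT}(x,y,y')=-\big[\nabla^2_{\boldsymbol{\phi}\boldsymbol{\phi}}\mathcal{L}_{BT}(\boldsymbol{\theta},\boldsymbol{\phi}^*(\boldsymbol{\theta}))\big]^{-1}\nabla_{\boldsymbol{\phi}}\ell_{BT}(x,y,y';\boldsymbol{\phi}^*(\boldsymbol{\theta}))$. Global reward gradient direction: $\bar{\mathbf{g}}_r(\boldsymbol{\theta})=\mathbb{E}_{x\sim P_{\mathcal{X}},\,y\sim\pi_{\boldsymbol{\theta}}(\cdot|x)}[\nabla_{\boldsymbol{\phi}}r_{\boldsymbol{\phi}}(x,y)]$ at $\boldsymbol{\phi}=\boldsymbol{\phi}^*(\boldsymbol{\theta})$.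 *)

theory Defs
  imports "HOL-Probability.Probability"
begin

definition grad :: "('a::euclidean_space \<Rightarrow> real) \<Rightarrow> 'a \<Rightarrow> 'a" where
  "grad f x = (\<Sum>i\<in>Basis. frechet_derivative f (at x) i *\<^sub>R i)"

definition hess :: "('a::euclidean_space \<Rightarrow> real) \<Rightarrow> 'a \<Rightarrow> 'a \<Rightarrow> 'a" where
  "hess f x = frechet_derivative (grad f) (at x)"

definition C2_param :: "'a::euclidean_space set \<Rightarrow> ('a \<Rightarrow> 'z::topological_space \<Rightarrow> real) \<Rightarrow> bool" where
  "C2_param U f \<longleftrightarrow>
     (\<forall>z. \<forall>t\<in>U. (\<lambda>t. f t z) differentiable (at t) \<and> grad (\<lambda>t. f t z) differentiable (at t)) \<and>
     continuous_on (U \<times> UNIV) (\<lambda>(t, z). f t z) \<and>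
     continuous_on (U \<times> UNIV) (\<lambda>(t, z). grad (\<lambda>t. f t z) t) \<and>
     (\<forall>h. continuous_on (U \<times> UNIV) (\<lambda>(t, z). hess (\<lambda>t. f t z) t h))"

definition strongly_convex :: "('a::real_normed_vector \<Rightarrow> real) \<Rightarrow> bool" where
  "strongly_convex f \<longleftrightarrow> (\<exists>m>0. \<forall>u v. \<forall>s::real. 0 \<le> s \<and> s \<le> 1 \<longrightarrow>
      f (s *\<^sub>R u + (1 - s) *\<^sub>R v) \<le> s * f u + (1 - s) * f v - m / 2 * s * (1 - s) * (norm (u - v))\<^sup>2)"

definition sigmoid :: "real \<Rightarrow> real" where
  "sigmoid t = 1 / (1 + exp (- t))"

definition KL :: "'y measure \<Rightarrow> ('t \<Rightarrow> 'x \<Rightarrow> 'y \<Rightarrow> real) \<Rightarrow> ('x \<Rightarrow> 'y \<Rightarrow> real) \<Rightarrow> 't \<Rightarrow> 'x \<Rightarrow> real" where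
  "KL \<mu> pol piref \<theta> x = (\<integral>y. pol \<theta> x y * ln (pol \<theta> x y / piref x y) \<partial>\<mu>)"

definition Jobj :: "'x measure \<Rightarrow> 'y measure \<Rightarrow> ('t \<Rightarrow> 'x \<Rightarrow> 'y \<Rightarrow> real) \<Rightarrow> ('x \<Rightarrow> 'y \<Rightarrow> real)
    \<Rightarrow> real \<Rightarrow> ('p \<Rightarrow> 'x \<Rightarrow> 'y \<Rightarrow> real) \<Rightarrow> 't \<Rightarrow> 'p \<Rightarrow> real" where
  "Jobj PX \<mu> pol piref \<beta> r \<theta> \<phi> =
     (\<integral>x. (\<integral>y. pol \<theta> x y * r \<phi> x y \<partial>\<mu>) - \<beta> * KL \<mu> pol piref \<theta> x \<partial>PX)"

definition Pphi :: "('p \<Rightarrow> 'x \<Rightarrow> 'y \<Rightarrow> real) \<Rightarrow> 'p \<Rightarrow> 'x \<Rightarrow> 'y \<Rightarrow> 'y \<Rightarrow> real" where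
  "Pphi r \<phi> x y y' = sigmoid (r \<phi> x y - r \<phi> x y')"

definition lBT :: "('x \<Rightarrow> 'y \<Rightarrow> 'y \<Rightarrow> real) \<Rightarrow> ('p \<Rightarrow> 'x \<Rightarrow> 'y \<Rightarrow> real) \<Rightarrow> 'x \<Rightarrow> 'y \<Rightarrow> 'y \<Rightarrow> 'p \<Rightarrow> real" where
  "lBT Pstar r x y y' \<phi> =
     - Pstar x y y' * ln (Pphi r \<phi> x y y') - Pstar x y' y * ln (Pphi r \<phi> x y' y)"

definition LBT :: "'x measure \<Rightarrow> 'y measure \<Rightarrow> ('t \<Rightarrow> 'x \<Rightarrow> 'y \<Rightarrow> real) \<Rightarrow> ('x \<Rightarrow> 'y \<Rightarrow> real)
    \<Rightarrow> ('x \<Rightarrow> 'y \<Rightarrow> 'y \<Rightarrow> real) \<Rightarrow> ('p \<Rightarrow> 'x \<Rightarrow> 'y \<Rightarrow> real) \<Rightarrow> ('p \<Rightarrow> real) \<Rightarrow> 't \<Rightarrow> 'p \<Rightarrow> real" where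
  "LBT PX \<mu> pol piref Pstar r \<Omega> \<theta> \<phi> =
     (\<integral>x. (\<integral>y. (\<integral>y'. pol \<theta> x y * piref x y' * lBT Pstar r x y y' \<phi> \<partial>\<mu>) \<partial>\<mu>) \<partial>PX) + \<Omega> \<phi>"

definition infl :: "'x measure \<Rightarrow> 'y measure \<Rightarrow> ('t \<Rightarrow> 'x \<Rightarrow> 'y \<Rightarrow> real) \<Rightarrow> ('x \<Rightarrow> 'y \<Rightarrow> real)
    \<Rightarrow> ('x \<Rightarrow> 'y \<Rightarrow> 'y \<Rightarrow> real) \<Rightarrow> ('p::euclidean_space \<Rightarrow> 'x \<Rightarrow> 'y \<Rightarrow> real) \<Rightarrow> ('p \<Rightarrow> real)
    \<Rightarrow> ('t \<Rightarrow> 'p) \<Rightarrow> 't \<Rightarrow> 'x \<Rightarrow> 'y \<Rightarrow> 'y \<Rightarrow> 'p" where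
  "infl PX \<mu> pol piref Pstar r \<Omega> phistar \<theta> x y y' =
     - (inv (hess (LBT PX \<mu> pol piref Pstar r \<Omega> \<theta>) (phistar \<theta>)))
         (grad (lBT Pstar r x y y') (phistar \<theta>))"

definition gbar :: "'x measure \<Rightarrow> 'y measure \<Rightarrow> ('t \<Rightarrow> 'x \<Rightarrow> 'y \<Rightarrow> real)
    \<Rightarrow> ('p::euclidean_space \<Rightarrow> 'x \<Rightarrow> 'y \<Rightarrow> real) \<Rightarrow> ('t \<Rightarrow> 'p) \<Rightarrow> 't \<Rightarrow> 'p" where
  "gbar PX \<mu> pol r phistar \<theta> =
     (\<integral>x. (\<integral>y. pol \<theta> x y *\<^sub>R grad (\<lambda>\<phi>. r \<phi> x y) (phistar \<theta>) \<partial>\<mu>) \<partial>PX)"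

definition rtilde :: "'x measure \<Rightarrow> 'y measure \<Rightarrow> ('t \<Rightarrow> 'x \<Rightarrow> 'y \<Rightarrow> real) \<Rightarrow> ('x \<Rightarrow> 'y \<Rightarrow> real)
    \<Rightarrow> ('x \<Rightarrow> 'y \<Rightarrow> 'y \<Rightarrow> real) \<Rightarrow> ('p::euclidean_space \<Rightarrow> 'x \<Rightarrow> 'y \<Rightarrow> real) \<Rightarrow> ('p \<Rightarrow> real)
    \<Rightarrow> ('t \<Rightarrow> 'p) \<Rightarrow> 't \<Rightarrow> 'x \<Rightarrow> 'y \<Rightarrow> real" where
  "rtilde PX \<mu> pol piref Pstar r \<Omega> phistar \<theta> x y =
     r (phistar \<theta>) x y +
     (\<integral>y'. piref x y' * (gbar PX \<mu> pol r phistar \<theta> \<bullet> infl PX \<mu> pol piref Pstar r \<Omega> phistar \<theta> x y y') \<partial>\<mu>)"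

end

theory Submission
  imports Defs
begin


definition Good :: "'a::euclidean_space set \<Rightarrow> ('a \<Rightarrow> 'z::topological_space \<Rightarrow> real) \<Rightarrow> ('a \<Rightarrow> 'z \<Rightarrow> 'a) \<Rightarrow> bool" where
  "Good U F D \<longleftrightarrow> open U \<and>
    (\<forall>t\<in>U. F t \<in> borel_measurable borel \<and> D t \<in> borel_measurable borel \<and>
       (\<exists>B. \<forall>z. \<bar>F t z\<bar> \<le> B \<and> norm (D t z) \<le> B)) \<and>
    (\<forall>t0\<in>U. \<forall>e>0. \<exists>d>0. \<forall>t z. norm (t - t0) < d \<longrightarrow> t \<in> U \<and>
        \<bar>F t z - F t0 z - D t0 z \<bullet> (t - t0)\<bar> \<le> e * norm (t - t0) \<and> norm (D t z - D t0 z) \<le> e)"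

lemma Good_cont:
  fixes F :: "'a::euclidean_space \<Rightarrow> 'z::{metric_space, second_countable_topology} \<Rightarrow> real"
  assumes U: "open U" and cpt: "compact (UNIV :: 'z set)"
    and cF: "continuous_on (U \<times> UNIV) (\<lambda>(t, z). F t z)"
    and cD: "continuous_on (U \<times> UNIV) (\<lambda>(t, z). D t z)"
    and dF: "\<And>t z. t \<in> U \<Longrightarrow> ((\<lambda>t. F t z) has_derivative (\<lambda>h. D t z \<bullet> h)) (at t)"
  shows "Good U F D"
  unfolding Good_def
proof (intro conjI ballI allI impI)
  show "open U" by fact
  fix t assume t: "t \<in> U"
  have cPt: "continuous_on UNIV (\<lambda>z::'z. (t, z))" by (intro continuous_intros)
  have sub: "(\<lambda>z. (t, z)) ` UNIV \<subseteq> U \<times> UNIV" using t by auto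
  have c1: "continuous_on UNIV (F t)"
    using continuous_on_compose2[OF cF cPt sub] by simp
  have c2: "continuous_on UNIV (D t)"
    using continuous_on_compose2[OF cD cPt sub] by simp
  show "F t \<in> borel_measurable borel" using c1 by (rule borel_measurable_continuous_onI)
  show "D t \<in> borel_measurable borel" using c2 by (rule borel_measurable_continuous_onI)
  have b1: "bounded (F t ` UNIV)" using compact_continuous_image[OF c1 cpt] compact_imp_bounded by blast
  have b2: "bounded (D t ` UNIV)" using compact_continuous_image[OF c2 cpt] compact_imp_bounded by blast
  obtain B1 where B1: "\<And>z. norm (F t z) \<le> B1" using b1 unfolding bounded_iff by auto
  obtain B2 where B2: "\<And>z. norm (D t z) \<le> B2" using b2 unfolding bounded_iff by auto
  show "\<exists>B. \<forall>z. \<bar>F t z\<bar> \<le> B \<and> norm (D t z) \<le> B"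
    using B1 B2 by (intro exI[of _ "max B1 B2"]) (auto simp: le_max_iff_disj)
next
  fix t0 :: 'a and e :: real assume t0: "t0 \<in> U" and e: "e > 0"
  obtain r where r: "r > 0" "cball t0 r \<subseteq> U" using U t0 open_contains_cball by blast
  have K: "compact (cball t0 r \<times> (UNIV :: 'z set))" by (intro compact_Times compact_cball cpt)
  have cK: "continuous_on (cball t0 r \<times> UNIV) (\<lambda>(t, z). D t z)"
    by (rule continuous_on_subset[OF cD]) (use r in auto)
  have uc: "uniformly_continuous_on (cball t0 r \<times> UNIV) (\<lambda>(t, z). D t z)"
    by (rule compact_uniformly_continuous[OF cK K])
  obtain d where d: "d > 0" and dd: "\<And>x x'. x \<in> cball t0 r \<times> UNIV \<Longrightarrow> x' \<in> cball t0 r \<times> UNIV \<Longrightarrow>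
      dist x' x < d \<Longrightarrow> dist ((\<lambda>(t, z). D t z) x') ((\<lambda>(t, z). D t z) x) < e"
    using uc e unfolding uniformly_continuous_on_def by metis
  define \<delta> where "\<delta> = min d r"
  have close: "norm (D s z - D t0 z) < e" if "norm (s - t0) < \<delta>" for s z
  proof -
    have "dist (s, z) (t0, z) < d" using that by (simp add: dist_Pair_Pair \<delta>_def dist_norm)
    moreover have "s \<in> cball t0 r" using that by (simp add: \<delta>_def dist_norm norm_minus_commute)
    ultimately show ?thesis using dd[of "(t0, z)" "(s, z)"] r by (auto simp: dist_norm)
  qed
  show "\<exists>d>0. \<forall>t z. norm (t - t0) < d \<longrightarrow> t \<in> U \<and>
        \<bar>F t z - F t0 z - D t0 z \<bullet> (t - t0)\<bar> \<le> e * norm (t - t0) \<and> norm (D t z - D t0 z) \<le> e"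
  proof (intro exI[of _ \<delta>] conjI allI impI)
    show "\<delta> > 0" using d r by (simp add: \<delta>_def)
    fix t z assume tt: "norm (t - t0) < \<delta>"
    have inU: "s \<in> U" if "s \<in> ball t0 \<delta>" for s
      using that r by (auto simp: \<delta>_def dist_norm norm_minus_commute)
    then show "t \<in> U" using tt by (simp add: dist_norm norm_minus_commute)
    show "norm (D t z - D t0 z) \<le> e" using close[OF tt, of z] by simp
    have "norm ((\<lambda>s. F s z - D t0 z \<bullet> s) t - (\<lambda>s. F s z - D t0 z \<bullet> s) t0) \<le> e * norm (t - t0)"
    proof (rule differentiable_bound[where S="ball t0 \<delta>" and f'="\<lambda>s h. (D s z - D t0 z) \<bullet> h"])
      show "convex (ball t0 \<delta>)" by simp
      fix s assume s: "s \<in> ball t0 \<delta>"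
      have "((\<lambda>s. F s z - D t0 z \<bullet> s) has_derivative (\<lambda>h. D s z \<bullet> h - D t0 z \<bullet> h)) (at s)"
        by (intro derivative_intros dF inU s)
      then show "((\<lambda>s. F s z - D t0 z \<bullet> s) has_derivative (\<lambda>h. (D s z - D t0 z) \<bullet> h)) (at s within ball t0 \<delta>)"
        by (auto intro: has_derivative_at_withinI simp: inner_diff_left)
      have "onorm (\<lambda>h. (D s z - D t0 z) \<bullet> h) \<le> norm (D s z - D t0 z)"
        by (rule onorm_bound) (auto simp: Cauchy_Schwarz_ineq2)
      also have "\<dots> \<le> e" using close[of s z] s by (simp add: dist_norm norm_minus_commute)
      finally show "onorm (\<lambda>h. (D s z - D t0 z) \<bullet> h) \<le> e" .
    next
      show "t \<in> ball t0 \<delta>" using tt by (simp add: dist_norm norm_minus_commute)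
      show "t0 \<in> ball t0 \<delta>" using d r by (simp add: \<delta>_def)
    qed
    then show "\<bar>F t z - F t0 z - D t0 z \<bullet> (t - t0)\<bar> \<le> e * norm (t - t0)"
      by (simp add: inner_diff_right algebra_simps)
  qed
qed

lemma int_norm_le:
  fixes f :: "'z \<Rightarrow> 'b::{banach, second_countable_topology}"
  assumes "finite_measure M" "integrable M f" "\<And>z. norm (f z) \<le> B"
  shows "norm (\<integral>z. f z \<partial>M) \<le> measure M (space M) * B"
proof -
  interpret finite_measure M by fact
  have "norm (\<integral>z. f z \<partial>M) \<le> (\<integral>z. norm (f z) \<partial>M)" by (rule integral_norm_bound)
  also have "\<dots> \<le> (\<integral>z. B \<partial>M)"
    by (intro integral_mono assms integrable_norm) (auto intro: assms)
  also have "\<dots> = measure M (space M) * B" by simp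
  finally show ?thesis .
qed

lemma meas_slice:
  fixes g :: "('w::second_countable_topology \<times> 'z::second_countable_topology) \<Rightarrow> 'b::{second_countable_topology, real_normed_vector}"
  assumes "g \<in> borel_measurable borel" "sets M = sets borel"
  shows "(\<lambda>z. g (w, z)) \<in> borel_measurable M"
proof -
  have "(\<lambda>z::'z. (w, z)) \<in> borel_measurable borel"
    by (intro borel_measurable_continuous_onI continuous_intros)
  then have "(\<lambda>z. g (w, z)) \<in> borel_measurable borel"
    using assms(1) by (rule measurable_compose)
  moreover have "borel_measurable M = (borel_measurable (borel::'z measure) :: ('z \<Rightarrow> 'b) set)"
    by (rule measurable_cong_sets[OF assms(2) refl])
  ultimately show ?thesis by simp
qed

lemma meas_int:
  fixes g :: "('w::second_countable_topology \<times> 'z::second_countable_topology) \<Rightarrow> 'b::{banach, second_countable_topology}"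
  assumes "g \<in> borel_measurable borel" "sets M = sets borel" "finite_measure M"
  shows "(\<lambda>w. \<integral>z. g (w, z) \<partial>M) \<in> borel_measurable borel"
proof -
  interpret finite_measure M by fact
  have "sets (borel \<Otimes>\<^sub>M M) = sets (borel \<Otimes>\<^sub>M (borel :: 'z measure))"
    by (intro sets_pair_measure_cong assms refl)
  also have "\<dots> = sets (borel :: ('w \<times> 'z) measure)" by (metis borel_prod)
  finally have "g \<in> borel_measurable (borel \<Otimes>\<^sub>M M)"
    using measurable_cong_sets[of "borel \<Otimes>\<^sub>M M" borel] assms(1) by auto
  then have "case_prod (\<lambda>w z. g (w, z)) \<in> borel_measurable (borel \<Otimes>\<^sub>M M)" by simp
  then show ?thesis by (rule borel_measurable_lebesgue_integral)
qed

lemma Good_int: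
  fixes F :: "'a::euclidean_space \<Rightarrow> ('w::second_countable_topology \<times> 'z::second_countable_topology) \<Rightarrow> real"
  assumes G: "Good U F D" and M: "finite_measure M" "sets M = sets borel"
  shows "Good U (\<lambda>t w. \<integral>z. F t (w, z) \<partial>M) (\<lambda>t w. \<integral>z. D t (w, z) \<partial>M)"
proof -
  interpret finite_measure M by fact
  define m where "m = measure M (space M)"
  have m0: "m \<ge> 0" by (simp add: m_def)
  have GU: "open U" and GM: "\<And>t. t \<in> U \<Longrightarrow> F t \<in> borel_measurable borel \<and> D t \<in> borel_measurable borel"
    and GB: "\<And>t. t \<in> U \<Longrightarrow> \<exists>B. \<forall>z. \<bar>F t z\<bar> \<le> B \<and> norm (D t z) \<le> B"
    and GD: "\<And>t0 e. t0 \<in> U \<Longrightarrow> e > 0 \<Longrightarrow> \<exists>d>0. \<forall>t z. norm (t - t0) < d \<longrightarrow> t \<in> U \<and>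
        \<bar>F t z - F t0 z - D t0 z \<bullet> (t - t0)\<bar> \<le> e * norm (t - t0) \<and> norm (D t z - D t0 z) \<le> e"
    using G unfolding Good_def by blast+
  have intF: "integrable M (\<lambda>z. F t (w, z))" and intD: "integrable M (\<lambda>z. D t (w, z))" if t: "t \<in> U" for t w
  proof -
    obtain B where B: "\<And>z. \<bar>F t z\<bar> \<le> B \<and> norm (D t z) \<le> B" using GB[OF t] by blast
    show "integrable M (\<lambda>z. F t (w, z))"
      by (rule integrable_const_bound[where B=B]) (use B GM[OF t] meas_slice[OF _ M(2)] in auto)
    show "integrable M (\<lambda>z. D t (w, z))"
      by (rule integrable_const_bound[where B=B]) (use B GM[OF t] meas_slice[OF _ M(2)] in auto)
  qed
  show ?thesis
    unfolding Good_def
  proof (intro conjI ballI allI impI)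
    show "open U" by fact
    fix t assume t: "t \<in> U"
    show "(\<lambda>w. \<integral>z. F t (w, z) \<partial>M) \<in> borel_measurable borel"
      using GM[OF t] meas_int M by blast
    show "(\<lambda>w. \<integral>z. D t (w, z) \<partial>M) \<in> borel_measurable borel"
      using GM[OF t] meas_int M by blast
    obtain B where B: "\<And>z. \<bar>F t z\<bar> \<le> B \<and> norm (D t z) \<le> B" using GB[OF t] by blast
    show "\<exists>B. \<forall>w. \<bar>\<integral>z. F t (w, z) \<partial>M\<bar> \<le> B \<and> norm (\<integral>z. D t (w, z) \<partial>M) \<le> B"
    proof (intro exI[of _ "m * B"] allI conjI)
      fix w
      show "\<bar>\<integral>z. F t (w, z) \<partial>M\<bar> \<le> m * B"
        using int_norm_le[OF M(1) intF[OF t], of w B] B by (simp add: m_def)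
      show "norm (\<integral>z. D t (w, z) \<partial>M) \<le> m * B"
        using int_norm_le[OF M(1) intD[OF t], of w B] B by (simp add: m_def)
    qed
  next
    fix t0 :: 'a and e :: real assume t0: "t0 \<in> U" and e: "e > 0"
    define e' where "e' = e / (m + 1)"
    have e': "e' > 0" using e m0 by (simp add: e'_def)
    have me': "m * e' \<le> e" using e m0 by (simp add: e'_def field_simps)
    obtain d where d: "d > 0" and dd: "\<And>t z. norm (t - t0) < d \<Longrightarrow> t \<in> U \<and>
        \<bar>F t z - F t0 z - D t0 z \<bullet> (t - t0)\<bar> \<le> e' * norm (t - t0) \<and> norm (D t z - D t0 z) \<le> e'"
      using GD[OF t0 e'] by blast
    show "\<exists>d>0. \<forall>t w. norm (t - t0) < d \<longrightarrow> t \<in> U \<and>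
        \<bar>(\<integral>z. F t (w, z) \<partial>M) - (\<integral>z. F t0 (w, z) \<partial>M) - (\<integral>z. D t0 (w, z) \<partial>M) \<bullet> (t - t0)\<bar> \<le> e * norm (t - t0) \<and>
        norm ((\<integral>z. D t (w, z) \<partial>M) - (\<integral>z. D t0 (w, z) \<partial>M)) \<le> e"
    proof (intro exI[of _ d] conjI allI impI d)
      fix t w assume tt: "norm (t - t0) < d"
      have tU: "t \<in> U" using dd[OF tt] by blast
      then show "t \<in> U" .
      have "(\<integral>z. F t (w, z) \<partial>M) - (\<integral>z. F t0 (w, z) \<partial>M) - (\<integral>z. D t0 (w, z) \<partial>M) \<bullet> (t - t0)
          = (\<integral>z. F t (w, z) - F t0 (w, z) - D t0 (w, z) \<bullet> (t - t0) \<partial>M)"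
        using intF[OF tU, of w] intF[OF t0, of w] intD[OF t0, of w]
        by (simp add: integral_diff integrable_inner_left)
      also have "\<bar>\<dots>\<bar> \<le> m * (e' * norm (t - t0))"
        unfolding m_def using int_norm_le[OF M(1), of "\<lambda>z. F t (w,z) - F t0 (w,z) - D t0 (w,z) \<bullet> (t-t0)" "e' * norm (t-t0)"] dd[OF tt]
          intF[OF tU, of w] intF[OF t0, of w] intD[OF t0, of w]
        by (auto intro!: integrable_inner_left)
      also have "\<dots> \<le> e * norm (t - t0)" using me' by (simp add: mult.assoc[symmetric] mult_right_mono)
      finally show "\<bar>(\<integral>z. F t (w, z) \<partial>M) - (\<integral>z. F t0 (w, z) \<partial>M) - (\<integral>z. D t0 (w, z) \<partial>M) \<bullet> (t - t0)\<bar> \<le> e * norm (t - t0)" .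
      have "(\<integral>z. D t (w, z) \<partial>M) - (\<integral>z. D t0 (w, z) \<partial>M) = (\<integral>z. D t (w, z) - D t0 (w, z) \<partial>M)"
        using intD[OF tU] intD[OF t0] by simp
      also have "norm \<dots> \<le> m * e'"
        unfolding m_def using dd[OF tt] by (intro int_norm_le[OF M(1)]) (auto intro!: intD tU t0)
      also have "\<dots> \<le> e" by fact
      finally show "norm ((\<integral>z. D t (w, z) \<partial>M) - (\<integral>z. D t0 (w, z) \<partial>M)) \<le> e" .
    qed
  qed
qed

lemma Good_deriv:
  assumes "Good U F D" "t \<in> U"
  shows "((\<lambda>t. F t z) has_derivative (\<lambda>h. D t z \<bullet> h)) (at t)"
  unfolding has_derivative_at_alt
proof (intro conjI allI impI)
  show "bounded_linear (\<lambda>h. D t z \<bullet> h)" by (rule bounded_linear_inner_right)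
  fix e :: real assume "e > 0"
  then obtain d where "d > 0" "\<forall>s z. norm (s - t) < d \<longrightarrow> s \<in> U \<and>
        \<bar>F s z - F t z - D t z \<bullet> (s - t)\<bar> \<le> e * norm (s - t) \<and> norm (D s z - D t z) \<le> e"
    using assms unfolding Good_def by blast
  then show "\<exists>d>0. \<forall>y. norm (y - t) < d \<longrightarrow> norm (F y z - F t z - D t z \<bullet> (y - t)) \<le> e * norm (y - t)"
    by auto
qed

lemma Good_Dcont:
  assumes "Good U F D"
  shows "continuous_on U (\<lambda>t. D t z)"
  unfolding continuous_on_iff
proof (intro ballI allI impI)
  fix t e assume t: "t \<in> U" and e: "(e::real) > 0"
  then obtain d where "d > 0" "\<forall>s z. norm (s - t) < d \<longrightarrow> s \<in> U \<and>
        \<bar>F s z - F t z - D t z \<bullet> (s - t)\<bar> \<le> e/2 * norm (s - t) \<and> norm (D s z - D t z) \<le> e/2"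
    using assms unfolding Good_def by (meson half_gt_zero)
  then show "\<exists>d>0. \<forall>x'\<in>U. dist x' t < d \<longrightarrow> dist (D x' z) (D t z) < e"
  proof (intro exI[of _ d] conjI ballI impI)
    fix x' assume "dist x' t < d"
    then have "norm (D x' z - D t z) \<le> e/2" using \<open>\<forall>s z. _\<close> by (auto simp: dist_norm)
    then show "dist (D x' z) (D t z) < e" using e by (simp add: dist_norm)
  qed
qed

lemma Good_add:
  assumes "Good U F D" "Good U F' D'"
  shows "Good U (\<lambda>t z. F t z + F' t z) (\<lambda>t z. D t z + D' t z)"
  unfolding Good_def
proof (intro conjI ballI allI impI)
  show "open U" using assms unfolding Good_def by blast
  fix t assume t: "t \<in> U"
  show "(\<lambda>z. F t z + F' t z) \<in> borel_measurable borel" "(\<lambda>z. D t z + D' t z) \<in> borel_measurable borel"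
    using assms t unfolding Good_def by (auto intro!: borel_measurable_add)
  obtain B where B: "\<And>z. \<bar>F t z\<bar> \<le> B \<and> norm (D t z) \<le> B" using assms(1) t unfolding Good_def by blast
  obtain B' where B': "\<And>z. \<bar>F' t z\<bar> \<le> B' \<and> norm (D' t z) \<le> B'" using assms(2) t unfolding Good_def by blast
  show "\<exists>B. \<forall>z. \<bar>F t z + F' t z\<bar> \<le> B \<and> norm (D t z + D' t z) \<le> B"
  proof (intro exI[of _ "B + B'"] allI conjI)
    fix z
    show "\<bar>F t z + F' t z\<bar> \<le> B + B'" using B[of z] B'[of z] by linarith
    show "norm (D t z + D' t z) \<le> B + B'" using B[of z] B'[of z] norm_triangle_ineq[of "D t z" "D' t z"] by linarith
  qed
next
  fix t0 :: 'a and e :: real assume t0: "t0 \<in> U" and e: "e > 0"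
  obtain d where d: "d > 0" "\<forall>t z. norm (t - t0) < d \<longrightarrow> t \<in> U \<and>
        \<bar>F t z - F t0 z - D t0 z \<bullet> (t - t0)\<bar> \<le> e/2 * norm (t - t0) \<and> norm (D t z - D t0 z) \<le> e/2"
    using assms(1) t0 e unfolding Good_def by (meson half_gt_zero)
  obtain d' where d': "d' > 0" "\<forall>t z. norm (t - t0) < d' \<longrightarrow> t \<in> U \<and>
        \<bar>F' t z - F' t0 z - D' t0 z \<bullet> (t - t0)\<bar> \<le> e/2 * norm (t - t0) \<and> norm (D' t z - D' t0 z) \<le> e/2"
    using assms(2) t0 e unfolding Good_def by (meson half_gt_zero)
  show "\<exists>d>0. \<forall>t z. norm (t - t0) < d \<longrightarrow> t \<in> U \<and>
        \<bar>F t z + F' t z - (F t0 z + F' t0 z) - (D t0 z + D' t0 z) \<bullet> (t - t0)\<bar> \<le> e * norm (t - t0) \<and>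
        norm (D t z + D' t z - (D t0 z + D' t0 z)) \<le> e"
  proof (intro exI[of _ "min d d'"] conjI allI impI)
    show "min d d' > 0" using d d' by simp
    fix t z assume tt: "norm (t - t0) < min d d'"
    then have A: "t \<in> U \<and> \<bar>F t z - F t0 z - D t0 z \<bullet> (t - t0)\<bar> \<le> e/2 * norm (t - t0) \<and> norm (D t z - D t0 z) \<le> e/2"
      and A': "\<bar>F' t z - F' t0 z - D' t0 z \<bullet> (t - t0)\<bar> \<le> e/2 * norm (t - t0) \<and> norm (D' t z - D' t0 z) \<le> e/2"
      using d(2) d'(2) by auto
    show "t \<in> U" using A by blast
    show "\<bar>F t z + F' t z - (F t0 z + F' t0 z) - (D t0 z + D' t0 z) \<bullet> (t - t0)\<bar> \<le> e * norm (t - t0)"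
    proof -
      have "F t z + F' t z - (F t0 z + F' t0 z) - (D t0 z + D' t0 z) \<bullet> (t - t0)
         = (F t z - F t0 z - D t0 z \<bullet> (t - t0)) + (F' t z - F' t0 z - D' t0 z \<bullet> (t - t0))"
        by (simp add: inner_add_left)
      then show ?thesis using A A' abs_triangle_ineq[of "F t z - F t0 z - D t0 z \<bullet> (t - t0)" "F' t z - F' t0 z - D' t0 z \<bullet> (t - t0)"]
        by linarith
    qed
    have "norm (D t z + D' t z - (D t0 z + D' t0 z)) \<le> norm (D t z - D t0 z) + norm (D' t z - D' t0 z)"
      by (metis add_diff_add norm_triangle_ineq)
    then show "norm (D t z + D' t z - (D t0 z + D' t0 z)) \<le> e" using A A' by linarith
  qed
qed

lemma Good_weight:
  assumes G: "Good U F D" and b: "b \<in> borel_measurable borel" "\<And>z. \<bar>b z\<bar> \<le> Bb"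
  shows "Good U (\<lambda>t z. b z * F t z) (\<lambda>t z. b z *\<^sub>R D t z)"
  unfolding Good_def
proof (intro conjI ballI allI impI)
  have Bb: "Bb \<ge> 0" using b(2)[of undefined] by linarith
  show "open U" using G unfolding Good_def by blast
  fix t assume t: "t \<in> U"
  show "(\<lambda>z. b z * F t z) \<in> borel_measurable borel" "(\<lambda>z. b z *\<^sub>R D t z) \<in> borel_measurable borel"
    using G t b unfolding Good_def by auto
  obtain B where B: "\<And>z. \<bar>F t z\<bar> \<le> B \<and> norm (D t z) \<le> B" using G t unfolding Good_def by blast
  show "\<exists>B. \<forall>z. \<bar>b z * F t z\<bar> \<le> B \<and> norm (b z *\<^sub>R D t z) \<le> B"
  proof (intro exI[of _ "Bb * B"] allI conjI)
    fix z
    show "\<bar>b z * F t z\<bar> \<le> Bb * B" unfolding abs_mult using B[of z] b(2)[of z]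
      by (intro mult_mono) auto
    show "norm (b z *\<^sub>R D t z) \<le> Bb * B" using B[of z] b(2)[of z]
      by (simp only: norm_scaleR) (intro mult_mono, auto)
  qed
next
  fix t0 :: 'a and e :: real assume t0: "t0 \<in> U" and e: "e > 0"
  have Bb: "Bb \<ge> 0" using b(2)[of undefined] by linarith
  define e' where "e' = e / (Bb + 1)"
  have e': "e' > 0" using e Bb by (simp add: e'_def)
  have me': "Bb * e' \<le> e" using e Bb by (simp add: e'_def field_simps)
  obtain d where d: "d > 0" "\<forall>t z. norm (t - t0) < d \<longrightarrow> t \<in> U \<and>
        \<bar>F t z - F t0 z - D t0 z \<bullet> (t - t0)\<bar> \<le> e' * norm (t - t0) \<and> norm (D t z - D t0 z) \<le> e'"
    using G t0 e' unfolding Good_def by blast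
  show "\<exists>d>0. \<forall>t z. norm (t - t0) < d \<longrightarrow> t \<in> U \<and>
        \<bar>b z * F t z - b z * F t0 z - (b z *\<^sub>R D t0 z) \<bullet> (t - t0)\<bar> \<le> e * norm (t - t0) \<and>
        norm (b z *\<^sub>R D t z - b z *\<^sub>R D t0 z) \<le> e"
  proof (intro exI[of _ d] conjI allI impI)
    show "d > 0" by fact
    fix t z assume tt: "norm (t - t0) < d"
    then have A: "t \<in> U" "\<bar>F t z - F t0 z - D t0 z \<bullet> (t - t0)\<bar> \<le> e' * norm (t - t0)" "norm (D t z - D t0 z) \<le> e'"
      using d(2) by auto
    show "t \<in> U" by fact
    have "\<bar>b z * F t z - b z * F t0 z - (b z *\<^sub>R D t0 z) \<bullet> (t - t0)\<bar> = \<bar>b z\<bar> * \<bar>F t z - F t0 z - D t0 z \<bullet> (t - t0)\<bar>"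
      by (simp add: abs_mult[symmetric] algebra_simps)
    also have "\<dots> \<le> Bb * (e' * norm (t - t0))" using A b(2)[of z] by (intro mult_mono) auto
    also have "\<dots> \<le> e * norm (t - t0)" using me' by (simp add: mult.assoc[symmetric] mult_right_mono)
    finally show "\<bar>b z * F t z - b z * F t0 z - (b z *\<^sub>R D t0 z) \<bullet> (t - t0)\<bar> \<le> e * norm (t - t0)" .
    have "norm (b z *\<^sub>R D t z - b z *\<^sub>R D t0 z) = \<bar>b z\<bar> * norm (D t z - D t0 z)"
      by (simp add: scaleR_diff_right[symmetric])
    also have "\<dots> \<le> Bb * e'" using A b(2)[of z] by (intro mult_mono) auto
    finally show "norm (b z *\<^sub>R D t z - b z *\<^sub>R D t0 z) \<le> e" using me' by linarith
  qed
qed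

lemma deriv_quot_ge:
  fixes q :: "real \<Rightarrow> real"
  assumes q: "(q has_real_derivative D) (at 0)"
    and le: "\<And>s. 0 < s \<Longrightarrow> s < 1 \<Longrightarrow> c s \<le> (q s - q 0) / s"
    and c: "(c \<longlongrightarrow> c0) (at_right 0)"
  shows "c0 \<le> D"
proof -
  have "((\<lambda>y. (q y - q 0) / (y - 0)) \<longlongrightarrow> D) (at 0)"
    using q has_field_derivative_iff by blast
  then have "((\<lambda>y. (q y - q 0) / y) \<longlongrightarrow> D) (at_right 0)"
    by (auto intro: tendsto_mono[OF at_le])
  moreover have "\<forall>\<^sub>F s in at_right 0. c s \<le> (q s - q 0) / s"
    by (rule eventually_at_rightI[of 0 1]) (auto intro: le)
  ultimately show ?thesis
    using tendsto_le[OF trivial_limit_at_right_real _ c] by blast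
qed

lemma deriv_quot_le:
  fixes q :: "real \<Rightarrow> real"
  assumes q: "(q has_real_derivative D) (at 0)"
    and le: "\<And>s. 0 < s \<Longrightarrow> s < 1 \<Longrightarrow> (q s - q 0) / s \<le> c s"
    and c: "(c \<longlongrightarrow> c0) (at_right 0)"
  shows "D \<le> c0"
proof -
  have "((\<lambda>y. (q y - q 0) / (y - 0)) \<longlongrightarrow> D) (at 0)"
    using q has_field_derivative_iff by blast
  then have "((\<lambda>y. (q y - q 0) / y) \<longlongrightarrow> D) (at_right 0)"
    by (auto intro: tendsto_mono[OF at_le])
  moreover have "\<forall>\<^sub>F s in at_right 0. (q s - q 0) / s \<le> c s"
    by (rule eventually_at_rightI[of 0 1]) (auto intro: le)
  ultimately show ?thesis
    using tendsto_le[OF trivial_limit_at_right_real c] by blast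
qed

lemma line_deriv:
  fixes f :: "'p::euclidean_space \<Rightarrow> real"
  assumes "(f has_derivative (\<lambda>h. g \<bullet> h)) (at w)"
  shows "((\<lambda>s. f (w + s *\<^sub>R v)) has_real_derivative (g \<bullet> v)) (at 0)"
proof -
  have "((\<lambda>s::real. w + s *\<^sub>R v) has_derivative (\<lambda>s. s *\<^sub>R v)) (at 0)"
    by (auto intro!: derivative_eq_intros)
  moreover have "(f has_derivative (\<lambda>h. g \<bullet> h)) (at (w + 0 *\<^sub>R v))" using assms by simp
  ultimately have "((\<lambda>s. f (w + s *\<^sub>R v)) has_derivative (\<lambda>s. g \<bullet> (s *\<^sub>R v))) (at 0)"
    by (rule has_derivative_compose)
  then show ?thesis
    unfolding has_field_derivative_def by (rule has_derivative_eq_rhs) (auto simp: mult.commute)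
qed

lemma sc_first:
  fixes f :: "'p::euclidean_space \<Rightarrow> real"
  assumes sc: "strongly_convex f" and df: "\<And>w. (f has_derivative (\<lambda>h. gf w \<bullet> h)) (at w)"
  shows "\<exists>m>0. \<forall>u w. f w + gf w \<bullet> (u - w) + m / 2 * (norm (u - w))\<^sup>2 \<le> f u"
proof -
  obtain m where m: "m > 0" and ineq: "\<And>u v s. 0 \<le> s \<Longrightarrow> s \<le> 1 \<Longrightarrow>
      f (s *\<^sub>R u + (1 - s) *\<^sub>R v) \<le> s * f u + (1 - s) * f v - m / 2 * s * (1 - s) * (norm (u - v))\<^sup>2"
    using sc unfolding strongly_convex_def by blast
  show ?thesis
  proof (intro exI[of _ m] conjI allI m)
    fix u w :: 'p
    define v where "v = u - w"
    let ?c = "\<lambda>s. f u - f w - m / 2 * (1 - s) * (norm v)\<^sup>2"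
    have "gf w \<bullet> v \<le> ?c 0"
    proof (rule deriv_quot_le[OF line_deriv[OF df]])
      fix s :: real assume s: "0 < s" "s < 1"
      have eq: "s *\<^sub>R u + (1 - s) *\<^sub>R w = w + s *\<^sub>R v" by (simp add: v_def algebra_simps)
      have "f (w + s *\<^sub>R v) \<le> s * f u + (1 - s) * f w - m / 2 * s * (1 - s) * (norm v)\<^sup>2"
        using ineq[of s u w] s by (simp add: eq v_def)
      then have "f (w + s *\<^sub>R v) - f (w + 0 *\<^sub>R v) \<le> s * ?c s" by (simp add: algebra_simps)
      then show "(f (w + s *\<^sub>R v) - f (w + 0 *\<^sub>R v)) / s \<le> ?c s"
        using s by (simp add: field_simps)
    next
      show "(?c \<longlongrightarrow> ?c 0) (at_right 0)"
        by (intro tendsto_intros) (auto intro: tendsto_eq_intros)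
    qed
    then show "f w + gf w \<bullet> (u - w) + m / 2 * (norm (u - w))\<^sup>2 \<le> f u" by (simp add: v_def)
  qed
qed

lemma sc_hess:
  fixes f :: "'p::euclidean_space \<Rightarrow> real"
  assumes sc: "strongly_convex f" and df: "\<And>w. (f has_derivative (\<lambda>h. gf w \<bullet> h)) (at w)"
    and dg: "(gf has_derivative H) (at w0)"
  shows "inj H"
proof -
  obtain m where m: "m > 0" and fo: "\<And>u w. f w + gf w \<bullet> (u - w) + m / 2 * (norm (u - w))\<^sup>2 \<le> f u"
    using sc_first[OF sc df] by blast
  have mono: "m * (norm (u - w))\<^sup>2 \<le> (gf u - gf w) \<bullet> (u - w)" for u w
    using fo[of u w] fo[of w u] by (simp add: inner_diff_left inner_diff_right norm_minus_commute inner_commute)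
  have lin: "linear H" using dg has_derivative_linear by blast
  have pos: "m * (norm k)\<^sup>2 \<le> H k \<bullet> k" for k
  proof (rule deriv_quot_ge[where c="\<lambda>_. m * (norm k)\<^sup>2"])
    have "((\<lambda>s::real. w0 + s *\<^sub>R k) has_derivative (\<lambda>s. s *\<^sub>R k)) (at 0)"
      by (auto intro!: derivative_eq_intros)
    moreover have "(gf has_derivative H) (at (w0 + 0 *\<^sub>R k))" using dg by simp
    ultimately have "((\<lambda>s. gf (w0 + s *\<^sub>R k)) has_derivative (\<lambda>s. H (s *\<^sub>R k))) (at 0)"
      by (rule has_derivative_compose)
    then have "((\<lambda>s. gf (w0 + s *\<^sub>R k) \<bullet> k) has_derivative (\<lambda>s. H (s *\<^sub>R k) \<bullet> k)) (at 0)"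
      by (auto intro!: derivative_eq_intros)
    then show "((\<lambda>s. gf (w0 + s *\<^sub>R k) \<bullet> k) has_real_derivative (H k \<bullet> k)) (at 0)"
      unfolding has_field_derivative_def by (rule has_derivative_eq_rhs) (auto simp: linear_scale[OF lin] mult.commute)
  next
    fix s :: real assume s: "0 < s" "s < 1"
    have "m * (norm (s *\<^sub>R k))\<^sup>2 \<le> (gf (w0 + s *\<^sub>R k) - gf w0) \<bullet> (s *\<^sub>R k)"
      using mono[of "w0 + s *\<^sub>R k" w0] by simp
    then have "s * (m * (norm k)\<^sup>2) * s \<le> s * ((gf (w0 + s *\<^sub>R k) \<bullet> k - gf (w0 + 0 *\<^sub>R k) \<bullet> k))"
      using s by (simp add: power2_eq_square inner_diff_left algebra_simps)
    then have "m * (norm k)\<^sup>2 * s \<le> gf (w0 + s *\<^sub>R k) \<bullet> k - gf (w0 + 0 *\<^sub>R k) \<bullet> k"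
      using s by (simp add: mult.commute mult.left_commute)
    then show "m * (norm k)\<^sup>2 \<le> (gf (w0 + s *\<^sub>R k) \<bullet> k - gf (w0 + 0 *\<^sub>R k) \<bullet> k) / s"
      using s by (simp add: field_simps)
  qed simp
  show "inj H"
  proof (rule linear_injective_0[OF lin, THEN iffD2], intro allI impI)
    fix k assume "H k = 0"
    then have "m * (norm k)\<^sup>2 \<le> 0" using pos[of k] by simp
    then show "k = 0" using m by (simp add: mult_le_0_iff)
  qed
qed

lemma Good_dummy:
  fixes F :: "'a::euclidean_space \<Rightarrow> 'z::second_countable_topology \<Rightarrow> real"
  assumes "Good U F D"
  shows "Good U (\<lambda>t (w::'w::second_countable_topology \<times> 'z). F t (snd w)) (\<lambda>t w. D t (snd w))"
proof -
  have sm: "snd \<in> borel_measurable (borel :: ('w \<times> 'z) measure)"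
    by (intro borel_measurable_continuous_onI continuous_intros)
  show ?thesis
    using assms unfolding Good_def
    by (auto intro: measurable_compose[OF sm] simp: case_prod_beta')
qed

lemma Good_integrable:
  fixes F :: "'a::euclidean_space \<Rightarrow> ('w::second_countable_topology \<times> 'z::second_countable_topology) \<Rightarrow> real"
  assumes G: "Good U F D" and M: "finite_measure M" "sets M = sets borel" and t: "t \<in> U"
  shows "integrable M (\<lambda>z. F t (w, z))" "integrable M (\<lambda>z. D t (w, z))"
proof -
  interpret finite_measure M by fact
  obtain B where B: "\<And>z. \<bar>F t z\<bar> \<le> B \<and> norm (D t z) \<le> B" using G t unfolding Good_def by blast
  have m: "F t \<in> borel_measurable borel" "D t \<in> borel_measurable borel" using G t unfolding Good_def by blast+
  show "integrable M (\<lambda>z. F t (w, z))"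
    by (rule integrable_const_bound[where B=B]) (use B meas_slice[OF m(1) M(2)] in auto)
  show "integrable M (\<lambda>z. D t (w, z))"
    by (rule integrable_const_bound[where B=B]) (use B meas_slice[OF m(2) M(2)] in auto)
qed

definition MB :: "('z::topological_space \<Rightarrow> 'b::real_normed_vector) \<Rightarrow> bool" where
  "MB f \<longleftrightarrow> f \<in> borel_measurable borel \<and> (\<exists>B. \<forall>z. norm (f z) \<le> B)"

lemma MB_integrable:
  fixes f :: "('w::second_countable_topology \<times> 'z::second_countable_topology) \<Rightarrow> 'b::{banach, second_countable_topology}"
  assumes "MB f" "finite_measure M" "sets M = sets borel"
  shows "integrable M (\<lambda>z. f (w, z))"
proof -
  interpret finite_measure M by fact
  obtain B where B: "\<And>z. norm (f z) \<le> B" using assms(1) unfolding MB_def by blast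
  show ?thesis
    by (rule integrable_const_bound[where B=B]) (use B meas_slice[of f, OF _ assms(3)] assms(1) in \<open>auto simp: MB_def\<close>)
qed

lemma MB_int:
  fixes f :: "('w::second_countable_topology \<times> 'z::second_countable_topology) \<Rightarrow> 'b::{banach, second_countable_topology}"
  assumes "MB f" "finite_measure M" "sets M = sets borel"
  shows "MB (\<lambda>w. \<integral>z. f (w, z) \<partial>M)"
proof -
  obtain B where B: "\<And>z. norm (f z) \<le> B" using assms(1) unfolding MB_def by blast
  have "norm (\<integral>z. f (w, z) \<partial>M) \<le> measure M (space M) * B" for w
    using int_norm_le[OF assms(2) MB_integrable[OF assms]] B by blast
  moreover have "(\<lambda>w. \<integral>z. f (w, z) \<partial>M) \<in> borel_measurable borel"
    using meas_int[of f M] assms unfolding MB_def by blast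
  ultimately show ?thesis unfolding MB_def by blast
qed

lemma MB_cont:
  fixes f :: "'z::{metric_space, second_countable_topology} \<Rightarrow> 'b::{real_normed_vector, second_countable_topology}"
  assumes "compact (UNIV :: 'z set)" "continuous_on UNIV f"
  shows "MB f"
proof -
  have "bounded (f ` UNIV)" using compact_continuous_image[OF assms(2,1)] compact_imp_bounded by blast
  then obtain B where "\<And>z. norm (f z) \<le> B" unfolding bounded_iff by auto
  then show ?thesis unfolding MB_def using borel_measurable_continuous_onI[OF assms(2)] by blast
qed

lemma MB_add:
  fixes f g :: "'z::topological_space \<Rightarrow> 'b::{real_normed_vector, second_countable_topology}"
  shows "MB f \<Longrightarrow> MB g \<Longrightarrow> MB (\<lambda>z. f z + g z)"
  unfolding MB_def
proof (elim conjE exE, intro conjI)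
  fix B B' assume "\<forall>z. norm (f z) \<le> B" "\<forall>z. norm (g z) \<le> B'"
  then show "\<exists>B. \<forall>z. norm (f z + g z) \<le> B"
    by (intro exI[of _ "B + B'"]) (metis add_mono norm_triangle_ineq order_trans)
qed auto

lemma MB_scaleR:
  fixes f :: "'z::topological_space \<Rightarrow> real" and g :: "'z \<Rightarrow> 'b::{real_normed_vector, second_countable_topology}"
  shows "MB f \<Longrightarrow> MB g \<Longrightarrow> MB (\<lambda>z. f z *\<^sub>R g z)"
  unfolding MB_def
proof (elim conjE exE, intro conjI)
  fix B B' assume "\<forall>z. norm (f z) \<le> B" "\<forall>z. norm (g z) \<le> B'"
  then show "\<exists>B. \<forall>z. norm (f z *\<^sub>R g z) \<le> B"
  proof (intro exI[of _ "B * B'"] allI)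
    fix z
    have "\<bar>f z\<bar> \<le> B" "norm (g z) \<le> B'" using \<open>\<forall>z. norm (f z) \<le> B\<close> \<open>\<forall>z. norm (g z) \<le> B'\<close> by auto
    then show "norm (f z *\<^sub>R g z) \<le> B * B'"
      by (simp only: norm_scaleR) (intro mult_mono, auto)
  qed
qed auto

lemma MB_mult:
  fixes f g :: "'z::topological_space \<Rightarrow> real"
  shows "MB f \<Longrightarrow> MB g \<Longrightarrow> MB (\<lambda>z. f z * g z)"
  using MB_scaleR[of f g] by simp

lemma MB_lin:
  fixes g :: "'z::topological_space \<Rightarrow> 'b::{real_normed_vector, second_countable_topology}"
    and T :: "'b \<Rightarrow> 'c::{real_normed_vector, second_countable_topology}"
  assumes "bounded_linear T" "MB g"
  shows "MB (\<lambda>z. T (g z))"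
proof -
  obtain K where K: "\<And>x. norm (T x) \<le> norm x * K" "K \<ge> 0"
    using bounded_linear.nonneg_bounded[OF assms(1)] by blast
  obtain B where B: "\<And>z. norm (g z) \<le> B" using assms(2) unfolding MB_def by blast
  have "norm (T (g z)) \<le> B * K" for z using K(1)[of "g z"] B[of z] K(2)
    by (meson mult_right_mono order_trans)
  moreover have "(\<lambda>z. T (g z)) \<in> borel_measurable borel"
    using assms unfolding MB_def by (auto intro: borel_measurable_continuous_onI measurable_compose
        linear_continuous_on)
  ultimately show ?thesis unfolding MB_def by blast
qed

lemma int_lin:
  fixes f :: "('w::second_countable_topology \<times> 'z::second_countable_topology) \<Rightarrow> 'b::{banach, second_countable_topology}"
    and T :: "'b \<Rightarrow> 'c::{banach, second_countable_topology}"
  assumes "MB f" "finite_measure M" "sets M = sets borel" "bounded_linear T"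
  shows "(\<integral>z. T (f (w, z)) \<partial>M) = T (\<integral>z. f (w, z) \<partial>M)"
  by (rule integral_bounded_linear[OF assms(4) MB_integrable[OF assms(1-3)]])




lemma grad_works:
  fixes f :: "'a::euclidean_space \<Rightarrow> real"
  assumes "f differentiable (at x)"
  shows "(f has_derivative (\<lambda>h. grad f x \<bullet> h)) (at x)"
proof -
  let ?L = "frechet_derivative f (at x)"
  have d: "(f has_derivative ?L) (at x)" using assms frechet_derivative_works by blast
  have lin: "linear ?L" using d has_derivative_linear by blast
  have "?L h = grad f x \<bullet> h" for h
  proof -
    have "?L h = ?L (\<Sum>i\<in>Basis. (h \<bullet> i) *\<^sub>R i)" by (simp add: euclidean_representation)
    also have "\<dots> = (\<Sum>i\<in>Basis. (h \<bullet> i) * ?L i)" by (simp add: linear_sum[OF lin] linear_scale[OF lin])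
    also have "\<dots> = (\<Sum>i\<in>Basis. ?L i * (h \<bullet> i))" by (simp add: mult.commute)
    also have "\<dots> = h \<bullet> grad f x" by (simp add: grad_def inner_sum_right)
    also have "\<dots> = grad f x \<bullet> h" by (rule inner_commute)
    finally show ?thesis .
  qed
  then show ?thesis using d by (metis (no_types, lifting) ext)
qed

lemma grad_unique:
  fixes f :: "'a::euclidean_space \<Rightarrow> real"
  assumes "(f has_derivative (\<lambda>h. v \<bullet> h)) (at x)"
  shows "grad f x = v"
proof -
  have "frechet_derivative f (at x) = (\<lambda>h. v \<bullet> h)" using assms frechet_derivative_at by metis
  moreover have "(\<Sum>i\<in>Basis. (v \<bullet> i) *\<^sub>R i) = v" by (rule euclidean_representation)
  ultimately show ?thesis by (simp add: grad_def)
qed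

lemma hess_works:
  fixes f :: "'a::euclidean_space \<Rightarrow> real"
  assumes "grad f differentiable (at x)"
  shows "(grad f has_derivative hess f x) (at x)"
  using assms frechet_derivative_works unfolding hess_def by blast

lemma lin_col:
  fixes L :: "'a::euclidean_space \<Rightarrow> 'b::euclidean_space"
  assumes "linear L"
  shows "L k \<bullet> e = (\<Sum>i\<in>Basis. (L i \<bullet> e) *\<^sub>R i) \<bullet> k"
proof -
  have "L k = L (\<Sum>i\<in>Basis. (k \<bullet> i) *\<^sub>R i)" by (simp add: euclidean_representation)
  also have "\<dots> = (\<Sum>i\<in>Basis. (k \<bullet> i) *\<^sub>R L i)" by (simp add: linear_sum[OF assms] linear_scale[OF assms])
  also have "\<dots> \<bullet> e = (\<Sum>i\<in>Basis. (k \<bullet> i) * (L i \<bullet> e))" by (simp add: inner_sum_left)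
  also have "\<dots> = (\<Sum>i\<in>Basis. (L i \<bullet> e) * (i \<bullet> k))" by (simp add: inner_commute mult.commute)
  also have "\<dots> = (\<Sum>i\<in>Basis. (L i \<bullet> e) *\<^sub>R i) \<bullet> k" by (simp add: inner_sum_left)
  finally show ?thesis .
qed

definition sp :: "real \<Rightarrow> real" where "sp u = ln (1 + exp u)"

lemma sigmoid_alt: "sigmoid u = exp u / (1 + exp u)"
  unfolding sigmoid_def by (simp add: exp_minus field_simps)

lemma sp_deriv: "(sp has_real_derivative sigmoid u) (at u)"
  unfolding sp_def sigmoid_alt
  by (rule derivative_eq_intros refl | simp add: add_pos_pos)+

lemma onepexp [simp]: "1 + exp (u::real) \<noteq> 0"
  by (smt (verit) exp_gt_zero)

lemma sigmoid_deriv: "(sigmoid has_real_derivative (sigmoid u * (1 - sigmoid u))) (at u)"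
proof -
  have p: "1 + exp u > 0" by (smt (verit) exp_gt_zero)
  have "((\<lambda>u. exp u / (1 + exp u)) has_real_derivative (sigmoid u * (1 - sigmoid u))) (at u)"
    unfolding sigmoid_alt
    apply (rule derivative_eq_intros refl | simp)+
    using p by (simp add: field_simps)
  then show ?thesis by (simp add: sigmoid_alt[abs_def])
qed

lemma lBT_alt:
  assumes "\<And>x y y'. Pstar x y' y = 1 - Pstar x y y'"
  shows "lBT Pstar r x y y' \<phi> = sp (r \<phi> x y - r \<phi> x y') - Pstar x y y' * (r \<phi> x y - r \<phi> x y')"
proof -
  define d where "d = r \<phi> x y - r \<phi> x y'"
  have e1: "ln (sigmoid d) = - sp (- d)"
    unfolding sigmoid_def sp_def by (simp add: ln_div add_pos_pos)
  have e2: "ln (sigmoid (- d)) = - sp d"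
    unfolding sigmoid_def sp_def by (simp add: ln_div add_pos_pos)
  have e3: "sp (- d) = sp d - d"
  proof -
    have "1 + exp (- d) = (1 + exp d) * exp (- d)" by (simp add: field_simps exp_minus)
    moreover have "0 < 1 + exp d" by (simp add: add_pos_pos)
    ultimately show ?thesis unfolding sp_def by (simp add: ln_mult)
  qed
  have "lBT Pstar r x y y' \<phi> = - Pstar x y y' * ln (sigmoid d) - (1 - Pstar x y y') * ln (sigmoid (- d))"
    unfolding lBT_def Pphi_def assms[of x y y'] d_def by simp
  also have "\<dots> = sp d - Pstar x y y' * d" unfolding e1 e2 e3 by (simp add: algebra_simps)
  finally show ?thesis by (simp add: d_def)
qed




locale rl =
  fixes PX :: "'x::{metric_space, second_countable_topology} measure"
    and \<mu> :: "'y::{metric_space, second_countable_topology} measure"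
    and \<Theta> :: "'t::euclidean_space set"
    and pol :: "'t \<Rightarrow> 'x \<Rightarrow> 'y \<Rightarrow> real"
    and piref :: "'x \<Rightarrow> 'y \<Rightarrow> real"
    and r :: "'p::euclidean_space \<Rightarrow> 'x \<Rightarrow> 'y \<Rightarrow> real"
    and \<Omega> :: "'p \<Rightarrow> real"
    and Pstar :: "'x \<Rightarrow> 'y \<Rightarrow> 'y \<Rightarrow> real"
    and phistar :: "'t \<Rightarrow> 'p"
    and \<beta> :: real
    and \<theta> :: 't
  assumes XY_compact: "compact (UNIV :: ('x \<times> 'y) set)"
    and PX_prob: "prob_space PX" and PX_sets: "sets PX = sets borel"
    and mu_sets: "sets \<mu> = sets borel"
    and Theta_compact: "compact \<Theta>"
    and pi_pos: "\<And>t x y. pol t x y > 0"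
    and pi_density: "\<And>t x. t \<in> \<Theta> \<Longrightarrow> integrable \<mu> (pol t x) \<and> (\<integral>y. pol t x y \<partial>\<mu>) = 1"
    and pi_C2: "C2_param (interior \<Theta>) (\<lambda>t (x, y). pol t x y)"
    and piref_pos: "\<And>x y. piref x y > 0"
    and piref_cont: "continuous_on UNIV (\<lambda>(x, y). piref x y)"
    and piref_density: "\<And>x. integrable \<mu> (piref x) \<and> (\<integral>y. piref x y \<partial>\<mu>) = 1"
    and beta_pos: "\<beta> > 0"
    and r_C2: "C2_param UNIV (\<lambda>\<phi> (x, y). r \<phi> x y)"
    and Omega_C2: "C2_param UNIV (\<lambda>\<phi> (_::real). \<Omega> \<phi>)"
    and Pstar_range: "\<And>x y y'. 0 \<le> Pstar x y y' \<and> Pstar x y y' \<le> 1"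
    and Pstar_compl: "\<And>x y y'. Pstar x y' y = 1 - Pstar x y y'"
    and Pstar_meas: "(\<lambda>(x, y, y'). Pstar x y y') \<in> borel_measurable borel"
    and LBT_sconv: "\<And>t. t \<in> \<Theta> \<Longrightarrow> strongly_convex (LBT PX \<mu> pol piref Pstar r \<Omega> t)"
    and phistar_min: "\<And>t \<phi>. t \<in> \<Theta> \<Longrightarrow>
          LBT PX \<mu> pol piref Pstar r \<Omega> t (phistar t) \<le> LBT PX \<mu> pol piref Pstar r \<Omega> t \<phi>"
    and theta_int: "\<theta> \<in> interior \<Theta>"
begin

abbreviation "U0 \<equiv> interior \<Theta>"
definition "Dp t x y = grad (\<lambda>t. pol t x y) t"
definition "Dr \<phi> x y = grad (\<lambda>\<phi>. r \<phi> x y) \<phi>"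
definition "Hr \<phi> x y = hess (\<lambda>\<phi>. r \<phi> x y) \<phi>"
definition "Hc \<phi> x y e = (\<Sum>i\<in>Basis. (Hr \<phi> x y i \<bullet> e) *\<^sub>R i)"

lemma cX: "compact (UNIV :: 'x set)"
proof -
  have "compact (fst ` (UNIV :: ('x \<times> 'y) set))"
    by (intro compact_continuous_image continuous_intros XY_compact)
  then show ?thesis by simp
qed

lemma cY: "compact (UNIV :: 'y set)"
proof -
  have "compact (snd ` (UNIV :: ('x \<times> 'y) set))"
    by (intro compact_continuous_image continuous_intros XY_compact)
  then show ?thesis by simp
qed

lemma PX_fin: "finite_measure PX"
  using PX_prob by (simp add: prob_space_def)

lemma mu_fin: "finite_measure \<mu>"
proof -
  fix x0 :: 'x
  have cp: "continuous_on UNIV (\<lambda>y::'y. (x0, y))" by (intro continuous_intros)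
  have c: "continuous_on UNIV (piref x0)"
    using continuous_on_compose2[OF piref_cont cp] by simp
  obtain y0 where y0: "\<And>y. piref x0 y0 \<le> piref x0 y"
    using continuous_attains_inf[OF cY _ c] by auto
  define c0 where "c0 = piref x0 y0"
  have c0: "c0 > 0" using piref_pos by (simp add: c0_def)
  have sp: "space \<mu> = UNIV" using mu_sets sets_eq_imp_space_eq by fastforce
  have "ennreal c0 * emeasure \<mu> (space \<mu>) = (\<integral>\<^sup>+y. ennreal c0 \<partial>\<mu>)" by simp
  also have "\<dots> \<le> (\<integral>\<^sup>+y. ennreal (piref x0 y) \<partial>\<mu>)"
    by (intro nn_integral_mono ennreal_leI) (use y0 in \<open>auto simp: c0_def\<close>)
  also have "\<dots> = ennreal (\<integral>y. piref x0 y \<partial>\<mu>)"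
    using piref_density[of x0] piref_pos by (intro nn_integral_eq_integral) (auto intro: less_imp_le)
  also have "\<dots> = 1" using piref_density[of x0] by simp
  finally have "ennreal c0 * emeasure \<mu> (space \<mu>) \<le> 1" .
  then have "emeasure \<mu> (space \<mu>) \<noteq> \<infinity>" using c0
    by (auto simp: ennreal_mult_top top_unique)
  then show ?thesis by (rule finite_measureI)
qed

lemma U0_open: "open U0" by simp

lemma pol_facts:
  "\<And>t x y. t \<in> U0 \<Longrightarrow> ((\<lambda>t. pol t x y) has_derivative (\<lambda>h. Dp t x y \<bullet> h)) (at t)"
  "continuous_on (U0 \<times> UNIV) (\<lambda>(t, x, y). pol t x y)"
  "continuous_on (U0 \<times> UNIV) (\<lambda>(t, x, y). Dp t x y)"
proof -
  fix t x y assume t: "t \<in> U0"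
  have "\<forall>z. \<forall>t\<in>U0. (\<lambda>t. case z of (x, y) \<Rightarrow> pol t x y) differentiable (at t)"
    using pi_C2 unfolding C2_param_def by blast
  then have "(\<lambda>t. pol t x y) differentiable (at t)" using t by (drule_tac x="(x, y)" in spec) simp
  then show "((\<lambda>t. pol t x y) has_derivative (\<lambda>h. Dp t x y \<bullet> h)) (at t)"
    unfolding Dp_def by (rule grad_works)
next
  show "continuous_on (U0 \<times> UNIV) (\<lambda>(t, x, y). pol t x y)"
    using pi_C2 unfolding C2_param_def by blast
next
  have e: "(\<lambda>(t, z). grad (\<lambda>t. case z of (x, y) \<Rightarrow> pol t x y) t) = (\<lambda>(t, x, y). Dp t x y)"
    by (auto simp: fun_eq_iff Dp_def)
  show "continuous_on (U0 \<times> UNIV) (\<lambda>(t, x, y). Dp t x y)"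
    using pi_C2 unfolding C2_param_def e by blast
qed

lemma r_facts:
  "\<And>\<phi> x y. ((\<lambda>\<phi>. r \<phi> x y) has_derivative (\<lambda>h. Dr \<phi> x y \<bullet> h)) (at \<phi>)"
  "\<And>\<phi> x y. ((\<lambda>\<phi>. Dr \<phi> x y) has_derivative Hr \<phi> x y) (at \<phi>)"
  "continuous_on UNIV (\<lambda>(\<phi>, x, y). r \<phi> x y)"
  "continuous_on UNIV (\<lambda>(\<phi>, x, y). Dr \<phi> x y)"
  "\<And>h. continuous_on UNIV (\<lambda>(\<phi>, x, y). Hr \<phi> x y h)"
proof -
  fix \<phi> x y
  have A: "\<forall>z. \<forall>t\<in>UNIV. (\<lambda>t. case z of (x, y) \<Rightarrow> r t x y) differentiable (at t) \<and>
      grad (\<lambda>t. case z of (x, y) \<Rightarrow> r t x y) differentiable (at t)"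
    using r_C2 unfolding C2_param_def by blast
  have "(\<lambda>\<phi>. r \<phi> x y) differentiable (at \<phi>)"
    using A[rule_format, where z="(x, y)" and t=\<phi>] by simp
  then show "((\<lambda>\<phi>. r \<phi> x y) has_derivative (\<lambda>h. Dr \<phi> x y \<bullet> h)) (at \<phi>)"
    unfolding Dr_def by (rule grad_works)
  have "grad (\<lambda>\<phi>. r \<phi> x y) differentiable (at \<phi>)"
    using A[rule_format, where z="(x, y)" and t=\<phi>] by simp
  then have "(grad (\<lambda>\<phi>. r \<phi> x y) has_derivative Hr \<phi> x y) (at \<phi>)"
    unfolding Hr_def by (rule hess_works)
  moreover have "grad (\<lambda>\<phi>. r \<phi> x y) = (\<lambda>\<phi>. Dr \<phi> x y)" by (simp add: Dr_def fun_eq_iff)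
  ultimately show "((\<lambda>\<phi>. Dr \<phi> x y) has_derivative Hr \<phi> x y) (at \<phi>)" by simp
next
  show "continuous_on UNIV (\<lambda>(\<phi>, x, y). r \<phi> x y)"
    using r_C2 unfolding C2_param_def by simp
next
  have e: "(\<lambda>(t, z). grad (\<lambda>t. case z of (x, y) \<Rightarrow> r t x y) t) = (\<lambda>(t, x, y). Dr t x y)"
    by (auto simp: fun_eq_iff Dr_def)
  show "continuous_on UNIV (\<lambda>(\<phi>, x, y). Dr \<phi> x y)"
    using r_C2 unfolding C2_param_def e by simp
next
  fix h
  have e: "(\<lambda>(t, z). hess (\<lambda>t. case z of (x, y) \<Rightarrow> r t x y) t h) = (\<lambda>(t, x, y). Hr t x y h)"
    by (auto simp: fun_eq_iff Hr_def)
  have "\<forall>h. continuous_on UNIV (\<lambda>(t, z). hess (\<lambda>t. case z of (x, y) \<Rightarrow> r t x y) t h)"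
    using r_C2 unfolding C2_param_def by simp
  then show "continuous_on UNIV (\<lambda>(\<phi>, x, y). Hr \<phi> x y h)"
    unfolding e[symmetric] by blast
qed

lemma Omega_facts:
  "\<And>\<phi>. (\<Omega> has_derivative (\<lambda>h. grad \<Omega> \<phi> \<bullet> h)) (at \<phi>)"
  "\<And>\<phi>. (grad \<Omega> has_derivative hess \<Omega> \<phi>) (at \<phi>)"
  "\<And>h. continuous_on UNIV (\<lambda>\<phi>. hess \<Omega> \<phi> h)"
proof -
  fix \<phi>
  have "\<Omega> differentiable (at \<phi>)" "grad \<Omega> differentiable (at \<phi>)"
    using Omega_C2 unfolding C2_param_def by auto
  then show "(\<Omega> has_derivative (\<lambda>h. grad \<Omega> \<phi> \<bullet> h)) (at \<phi>)" "(grad \<Omega> has_derivative hess \<Omega> \<phi>) (at \<phi>)"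
    by (auto intro: grad_works hess_works)
next
  fix h
  have "continuous_on (UNIV \<times> UNIV) (\<lambda>(t, z::real). hess \<Omega> t h)"
    using Omega_C2 unfolding C2_param_def by simp
  moreover have "continuous_on UNIV (\<lambda>\<phi>::'p. (\<phi>, 0::real))" by (intro continuous_intros)
  ultimately have "continuous_on UNIV ((\<lambda>(t, z::real). hess \<Omega> t h) \<circ> (\<lambda>\<phi>. (\<phi>, 0)))"
    by (intro continuous_on_compose) (auto elim: continuous_on_subset)
  then show "continuous_on UNIV (\<lambda>\<phi>. hess \<Omega> \<phi> h)" by (simp add: o_def)
qed

lemma cpol [continuous_intros]:
  assumes "continuous_on S a" "continuous_on S b" "continuous_on S c" "\<And>w. w \<in> S \<Longrightarrow> a w \<in> U0"
  shows "continuous_on S (\<lambda>w. pol (a w) (b w) (c w))"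
proof -
  have "continuous_on S (\<lambda>w. (a w, b w, c w))" using assms by (intro continuous_intros)
  moreover have "(\<lambda>w. (a w, b w, c w)) ` S \<subseteq> U0 \<times> UNIV" using assms(4) by auto
  ultimately show ?thesis using continuous_on_compose2[OF pol_facts(2)] by fastforce
qed

lemma cDp [continuous_intros]:
  assumes "continuous_on S a" "continuous_on S b" "continuous_on S c" "\<And>w. w \<in> S \<Longrightarrow> a w \<in> U0"
  shows "continuous_on S (\<lambda>w. Dp (a w) (b w) (c w))"
proof -
  have "continuous_on S (\<lambda>w. (a w, b w, c w))" using assms by (intro continuous_intros)
  moreover have "(\<lambda>w. (a w, b w, c w)) ` S \<subseteq> U0 \<times> UNIV" using assms(4) by auto
  ultimately show ?thesis using continuous_on_compose2[OF pol_facts(3)] by fastforce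
qed

lemma cr [continuous_intros]:
  assumes "continuous_on S a" "continuous_on S b" "continuous_on S c"
  shows "continuous_on S (\<lambda>w. r (a w) (b w) (c w))"
proof -
  have "continuous_on S (\<lambda>w. (a w, b w, c w))" using assms by (intro continuous_intros)
  then show ?thesis using continuous_on_compose2[OF r_facts(3)] by fastforce
qed

lemma cDr [continuous_intros]:
  assumes "continuous_on S a" "continuous_on S b" "continuous_on S c"
  shows "continuous_on S (\<lambda>w. Dr (a w) (b w) (c w))"
proof -
  have "continuous_on S (\<lambda>w. (a w, b w, c w))" using assms by (intro continuous_intros)
  then show ?thesis using continuous_on_compose2[OF r_facts(4)] by fastforce
qed

lemma cHr [continuous_intros]:
  assumes "continuous_on S a" "continuous_on S b" "continuous_on S c"
  shows "continuous_on S (\<lambda>w. Hr (a w) (b w) (c w) h)"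
proof -
  have "continuous_on S (\<lambda>w. (a w, b w, c w))" using assms by (intro continuous_intros)
  then show ?thesis using continuous_on_compose2[OF r_facts(5)] by fastforce
qed

lemma cpiref [continuous_intros]:
  assumes "continuous_on S b" "continuous_on S c"
  shows "continuous_on S (\<lambda>w. piref (b w) (c w))"
proof -
  have "continuous_on S (\<lambda>w. (b w, c w))" using assms by (intro continuous_intros)
  then show ?thesis using continuous_on_compose2[OF piref_cont] by fastforce
qed

lemma csp [continuous_intros]: "continuous_on S f \<Longrightarrow> continuous_on S (\<lambda>w. sp (f w))"
  unfolding sp_def by (intro continuous_intros) (auto simp: add_pos_pos)

lemma csig [continuous_intros]: "continuous_on S f \<Longrightarrow> continuous_on S (\<lambda>w. sigmoid (f w))"
  unfolding sigmoid_alt by (intro continuous_intros) auto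

lemmas has_derivative_sp [derivative_intros] = sp_deriv[THEN DERIV_compose_FDERIV]
lemmas has_derivative_sigmoid [derivative_intros] = sigmoid_deriv[THEN DERIV_compose_FDERIV]

lemma pol_fst:
  "fst s \<in> U0 \<Longrightarrow> ((\<lambda>s. pol (fst s) x y) has_derivative (\<lambda>h. Dp (fst s) x y \<bullet> fst h)) (at s)"
  using has_derivative_compose[OF has_derivative_fst[OF has_derivative_ident] pol_facts(1)] by fast

lemma r_snd:
  "((\<lambda>s. r (snd s) x y) has_derivative (\<lambda>h. Dr (snd s) x y \<bullet> snd h)) (at s)"
  using has_derivative_compose[OF has_derivative_snd[OF has_derivative_ident] r_facts(1)] by fast

lemma Dr_snd:
  "((\<lambda>s. Dr (snd s) x y) has_derivative (\<lambda>h. Hr (snd s) x y (snd h))) (at s)"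
  using has_derivative_compose[OF has_derivative_snd[OF has_derivative_ident] r_facts(2)] by fast

lemma inner_Pair_left: "(a, b) \<bullet> h = a \<bullet> fst h + b \<bullet> snd h"
  by (cases h) simp

lemma Good_cont':
  fixes F :: "'a::euclidean_space \<Rightarrow> 'z::{metric_space, second_countable_topology} \<Rightarrow> real"
  assumes "open U" "compact (UNIV :: 'z set)"
    and "continuous_on (U \<times> UNIV) (\<lambda>w. F (fst w) (snd w))"
    and "continuous_on (U \<times> UNIV) (\<lambda>w. D (fst w) (snd w))"
    and "\<And>t z. t \<in> U \<Longrightarrow> ((\<lambda>t. F t z) has_derivative (\<lambda>h. D t z \<bullet> h)) (at t)"
  shows "Good U F D"
  by (rule Good_cont) (use assms in \<open>simp_all add: case_prod_beta'\<close>)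

abbreviation "U1 \<equiv> U0 \<times> (UNIV :: 'p set)"

lemma U1_open: "open U1" by (simp add: open_Times)

lemma cXYY: "compact (UNIV :: (('x \<times> 'y) \<times> 'y) set)"
  using compact_Times[OF XY_compact cY] by simp

definition "LA s z = pol (fst s) (fst (fst z)) (snd (fst z)) * piref (fst (fst z)) (snd z) *
   sp (r (snd s) (fst (fst z)) (snd (fst z)) - r (snd s) (fst (fst z)) (snd z))"
definition "DLA s z = ((piref (fst (fst z)) (snd z) * sp (r (snd s) (fst (fst z)) (snd (fst z)) - r (snd s) (fst (fst z)) (snd z)))
      *\<^sub>R Dp (fst s) (fst (fst z)) (snd (fst z)),
   (pol (fst s) (fst (fst z)) (snd (fst z)) * piref (fst (fst z)) (snd z) *
      sigmoid (r (snd s) (fst (fst z)) (snd (fst z)) - r (snd s) (fst (fst z)) (snd z)))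
      *\<^sub>R (Dr (snd s) (fst (fst z)) (snd (fst z)) - Dr (snd s) (fst (fst z)) (snd z)))"
definition "LB s z = - (pol (fst s) (fst (fst z)) (snd (fst z)) * piref (fst (fst z)) (snd z) *
   (r (snd s) (fst (fst z)) (snd (fst z)) - r (snd s) (fst (fst z)) (snd z)))"
definition "DLB s z = ((- (piref (fst (fst z)) (snd z) * (r (snd s) (fst (fst z)) (snd (fst z)) - r (snd s) (fst (fst z)) (snd z))))
      *\<^sub>R Dp (fst s) (fst (fst z)) (snd (fst z)),
   (- (pol (fst s) (fst (fst z)) (snd (fst z)) * piref (fst (fst z)) (snd z)))
      *\<^sub>R (Dr (snd s) (fst (fst z)) (snd (fst z)) - Dr (snd s) (fst (fst z)) (snd z)))"
definition "Pz z = Pstar (fst (fst z)) (snd (fst z)) (snd z)"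

lemma dLA: "fst s \<in> U0 \<Longrightarrow> ((\<lambda>s. LA s z) has_derivative (\<lambda>h. DLA s z \<bullet> h)) (at s)"
  unfolding LA_def
  apply (rule has_derivative_eq_rhs)
  apply (rule pol_fst r_snd Dr_snd | rule derivative_intros | assumption)+
  apply (simp add: DLA_def fun_eq_iff inner_Pair_left inner_diff_left algebra_simps)
  done
lemma dLB: "fst s \<in> U0 \<Longrightarrow> ((\<lambda>s. LB s z) has_derivative (\<lambda>h. DLB s z \<bullet> h)) (at s)"
  unfolding LB_def
  apply (rule has_derivative_eq_rhs)
  apply (rule pol_fst r_snd Dr_snd | rule derivative_intros | assumption)+
  apply (simp add: DLB_def fun_eq_iff inner_Pair_left inner_diff_left algebra_simps)
  done
lemma Good_LA: "Good U1 LA DLA"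
proof (rule Good_cont'[OF U1_open cXYY])
  show "continuous_on (U1 \<times> UNIV) (\<lambda>w. LA (fst w) (snd w))"
    unfolding LA_def by (intro continuous_intros) (auto simp: mem_Times_iff)
  show "continuous_on (U1 \<times> UNIV) (\<lambda>w. DLA (fst w) (snd w))"
    unfolding DLA_def by (intro continuous_intros) (auto simp: mem_Times_iff)
  fix s :: "'t \<times> 'p" and z :: "('x \<times> 'y) \<times> 'y" assume s: "s \<in> U1"
  show "((\<lambda>s. LA s z) has_derivative (\<lambda>h. DLA s z \<bullet> h)) (at s)"
    using s by (intro dLA) (auto simp: mem_Times_iff)
qed

lemma Good_LB: "Good U1 LB DLB"
proof (rule Good_cont'[OF U1_open cXYY])
  show "continuous_on (U1 \<times> UNIV) (\<lambda>w. LB (fst w) (snd w))"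
    unfolding LB_def by (intro continuous_intros) (auto simp: mem_Times_iff)
  show "continuous_on (U1 \<times> UNIV) (\<lambda>w. DLB (fst w) (snd w))"
    unfolding DLB_def by (intro continuous_intros) (auto simp: mem_Times_iff)
  fix s :: "'t \<times> 'p" and z :: "('x \<times> 'y) \<times> 'y" assume s: "s \<in> U1"
  show "((\<lambda>s. LB s z) has_derivative (\<lambda>h. DLB s z \<bullet> h)) (at s)"
    using s by (intro dLB) (auto simp: mem_Times_iff)
qed

lemma Pz_meas: "Pz \<in> borel_measurable borel" and Pz_bd: "\<bar>Pz z\<bar> \<le> 1"
proof -
  have "(\<lambda>z::('x \<times> 'y) \<times> 'y. (fst (fst z), snd (fst z), snd z)) \<in> borel_measurable borel"
    by (intro borel_measurable_continuous_onI continuous_intros)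
  from measurable_compose[OF this Pstar_meas] show "Pz \<in> borel_measurable borel"
    by (simp add: Pz_def[abs_def])
  show "\<bar>Pz z\<bar> \<le> 1" using Pstar_range by (simp add: Pz_def abs_le_iff)
qed

lemma Good_L: "Good U1 (\<lambda>s z. LA s z + Pz z * LB s z) (\<lambda>s z. DLA s z + Pz z *\<^sub>R DLB s z)"
  by (intro Good_add Good_LA Good_weight[where Bb=1] Good_LB Pz_meas Pz_bd)

end




lemma MB_slice:
  fixes f :: "('w::second_countable_topology \<times> 'z::second_countable_topology) \<Rightarrow> 'b::{real_normed_vector, second_countable_topology}"
  assumes "MB f" shows "MB (\<lambda>z. f (w, z))"
  using assms meas_slice[of f borel w] unfolding MB_def by auto

lemma MB_integrable1:
  fixes g :: "'z::topological_space \<Rightarrow> 'b::{banach, second_countable_topology}"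
  assumes "MB g" "finite_measure M" "sets M = sets borel"
  shows "integrable M g"
proof -
  interpret finite_measure M by fact
  obtain B where B: "\<And>z. norm (g z) \<le> B" using assms(1) unfolding MB_def by blast
  have e: "borel_measurable M = (borel_measurable borel :: ('z \<Rightarrow> 'b) set)"
    by (rule measurable_cong_sets[OF assms(3) refl])
  have "g \<in> borel_measurable M" using assms(1) unfolding MB_def e by simp
  then show ?thesis by (intro integrable_const_bound[where B=B]) (auto intro: B)
qed

lemma int_lin1:
  fixes g :: "'z::topological_space \<Rightarrow> 'b::{banach, second_countable_topology}"
    and T :: "'b \<Rightarrow> 'c::{banach, second_countable_topology}"
  assumes "MB g" "finite_measure M" "sets M = sets borel" "bounded_linear T"
  shows "(\<integral>z. T (g z) \<partial>M) = T (\<integral>z. g z \<partial>M)"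
  by (rule integral_bounded_linear[OF assms(4) MB_integrable1[OF assms(1-3)]])

lemma Good_MB:
  assumes "Good U F D" "t \<in> U"
  shows "MB (F t)" "MB (D t)"
proof -
  obtain B where B: "\<And>z. \<bar>F t z\<bar> \<le> B \<and> norm (D t z) \<le> B" using assms unfolding Good_def by blast
  have m: "F t \<in> borel_measurable borel" "D t \<in> borel_measurable borel" using assms unfolding Good_def by blast+
  show "MB (F t)" "MB (D t)" unfolding MB_def using B m by auto
qed

context rl begin

lemma comm3:
  fixes f :: "('x \<times> 'y) \<times> 'y \<Rightarrow> 'b::{banach, second_countable_topology}"
    and T :: "'b \<Rightarrow> 'c::{banach, second_countable_topology}"
  assumes f: "MB f" and T: "bounded_linear T"
  shows "(\<integral>x. \<integral>y. \<integral>y'. T (f ((x, y), y')) \<partial>\<mu> \<partial>\<mu> \<partial>PX) = T (\<integral>x. \<integral>y. \<integral>y'. f ((x, y), y') \<partial>\<mu> \<partial>\<mu> \<partial>PX)"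
proof -
  have f2: "MB (\<lambda>w. \<integral>y'. f (w, y') \<partial>\<mu>)" by (rule MB_int[OF f mu_fin mu_sets])
  have f3: "MB (\<lambda>x. \<integral>y. \<integral>y'. f ((x, y), y') \<partial>\<mu> \<partial>\<mu>)" using MB_int[OF f2 mu_fin mu_sets] by simp
  have "(\<integral>x. \<integral>y. \<integral>y'. T (f ((x, y), y')) \<partial>\<mu> \<partial>\<mu> \<partial>PX) = (\<integral>x. \<integral>y. T (\<integral>y'. f ((x, y), y') \<partial>\<mu>) \<partial>\<mu> \<partial>PX)"
    by (simp add: int_lin1[OF MB_slice[OF f] mu_fin mu_sets T])
  also have "\<dots> = (\<integral>x. T (\<integral>y. \<integral>y'. f ((x, y), y') \<partial>\<mu> \<partial>\<mu>) \<partial>PX)"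
    using int_lin1[OF MB_slice[OF f2] mu_fin mu_sets T] by simp
  also have "\<dots> = T (\<integral>x. \<integral>y. \<integral>y'. f ((x, y), y') \<partial>\<mu> \<partial>\<mu> \<partial>PX)"
    by (rule int_lin1[OF f3 PX_fin PX_sets T])
  finally show ?thesis .
qed

lemma comm2:
  fixes f :: "('x \<times> 'y) \<Rightarrow> 'b::{banach, second_countable_topology}"
    and T :: "'b \<Rightarrow> 'c::{banach, second_countable_topology}"
  assumes f: "MB f" and T: "bounded_linear T"
  shows "(\<integral>x. \<integral>y. T (f (x, y)) \<partial>\<mu> \<partial>PX) = T (\<integral>x. \<integral>y. f (x, y) \<partial>\<mu> \<partial>PX)"
proof -
  have f2: "MB (\<lambda>x. \<integral>y. f (x, y) \<partial>\<mu>)" by (rule MB_int[OF f mu_fin mu_sets])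
  have "(\<integral>x. \<integral>y. T (f (x, y)) \<partial>\<mu> \<partial>PX) = (\<integral>x. T (\<integral>y. f (x, y) \<partial>\<mu>) \<partial>PX)"
    by (simp add: int_lin1[OF MB_slice[OF f] mu_fin mu_sets T])
  also have "\<dots> = T (\<integral>x. \<integral>y. f (x, y) \<partial>\<mu> \<partial>PX)"
    by (rule int_lin1[OF f2 PX_fin PX_sets T])
  finally show ?thesis .
qed

definition "L0 s z = LA s z + Pz z * LB s z"
definition "D0 s z = DLA s z + Pz z *\<^sub>R DLB s z"

lemma Good_L0: "Good U1 L0 D0"
  using Good_L unfolding L0_def[abs_def] D0_def[abs_def] .

lemma L0_eq: "pol t x y * piref x y' * lBT Pstar r x y y' \<phi> = L0 (t, \<phi>) ((x, y), y')"
  by (simp add: L0_def LA_def LB_def Pz_def lBT_alt[OF Pstar_compl] algebra_simps)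

definition "LBTi s = (\<integral>x. \<integral>y. \<integral>y'. L0 s ((x, y), y') \<partial>\<mu> \<partial>\<mu> \<partial>PX)"
definition "DLBTi s = (\<integral>x. \<integral>y. \<integral>y'. D0 s ((x, y), y') \<partial>\<mu> \<partial>\<mu> \<partial>PX)"

lemma Good3:
  fixes L :: "'t \<times> 'p \<Rightarrow> ('x \<times> 'y) \<times> 'y \<Rightarrow> real"
  assumes G: "Good U1 L D"
  shows "Good U1 (\<lambda>s (w::real). \<integral>x. \<integral>y. \<integral>y'. L s ((x, y), y') \<partial>\<mu> \<partial>\<mu> \<partial>PX)
                  (\<lambda>s w. \<integral>x. \<integral>y. \<integral>y'. D s ((x, y), y') \<partial>\<mu> \<partial>\<mu> \<partial>PX)"
proof -
  have G1: "Good U1 (\<lambda>s w. \<integral>y'. L s (w, y') \<partial>\<mu>) (\<lambda>s w. \<integral>y'. D s (w, y') \<partial>\<mu>)"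
    by (rule Good_int[OF G mu_fin mu_sets])
  have G2: "Good U1 (\<lambda>s x. \<integral>y. \<integral>y'. L s ((x, y), y') \<partial>\<mu> \<partial>\<mu>) (\<lambda>s x. \<integral>y. \<integral>y'. D s ((x, y), y') \<partial>\<mu> \<partial>\<mu>)"
    using Good_int[OF G1 mu_fin mu_sets] by simp
  show ?thesis
    using Good_int[OF Good_dummy[OF G2, where 'w=real] PX_fin PX_sets] by simp
qed

lemma Good_LBTi: "Good U1 (\<lambda>s (w::real). LBTi s) (\<lambda>s w. DLBTi s)"
  using Good3[OF Good_L0] unfolding LBTi_def DLBTi_def .

lemma dLBTi: "s \<in> U1 \<Longrightarrow> (LBTi has_derivative (\<lambda>h. DLBTi s \<bullet> h)) (at s)"
  using Good_deriv[OF Good_LBTi, of s] by simp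

lemma DLBTi_cont: "continuous_on U1 DLBTi"
  using Good_Dcont[OF Good_LBTi] by simp

lemma LBT_eq: "LBT PX \<mu> pol piref Pstar r \<Omega> t \<phi> = LBTi (t, \<phi>) + \<Omega> \<phi>"
  unfolding LBT_def LBTi_def L0_eq ..

definition "Gf t \<phi> = snd (DLBTi (t, \<phi>)) + grad \<Omega> \<phi>"

lemma dLBT_phi:
  assumes t: "t \<in> U0"
  shows "(LBT PX \<mu> pol piref Pstar r \<Omega> t has_derivative (\<lambda>k. Gf t \<phi> \<bullet> k)) (at \<phi>)"
proof -
  have "((\<lambda>\<phi>. (t, \<phi>)) has_derivative (\<lambda>k. (0, k))) (at \<phi>)"
    by (auto intro!: derivative_eq_intros)
  moreover have "(LBTi has_derivative (\<lambda>h. DLBTi (t, \<phi>) \<bullet> h)) (at (t, \<phi>))"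
    using t by (intro dLBTi) auto
  ultimately have "((\<lambda>\<phi>. LBTi (t, \<phi>)) has_derivative (\<lambda>k. DLBTi (t, \<phi>) \<bullet> (0, k))) (at \<phi>)"
    by (rule has_derivative_compose)
  then have "((\<lambda>\<phi>. LBTi (t, \<phi>) + \<Omega> \<phi>) has_derivative (\<lambda>k. DLBTi (t, \<phi>) \<bullet> (0, k) + grad \<Omega> \<phi> \<bullet> k)) (at \<phi>)"
    by (intro has_derivative_add Omega_facts(1))
  then show ?thesis
    unfolding LBT_eq[abs_def] Gf_def by (simp add: inner_Pair_0 inner_add_left)
qed

lemma cHc [continuous_intros]:
  assumes "continuous_on S a" "continuous_on S b" "continuous_on S c"
  shows "continuous_on S (\<lambda>w. Hc (a w) (b w) (c w) e)"
  unfolding Hc_def using assms by (intro continuous_intros)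

lemma Hr_lin: "linear (Hr \<phi> x y)"
  using r_facts(2) has_derivative_linear by blast

lemma Hr_Hc: "Hr \<phi> x y k \<bullet> e = Hc \<phi> x y e \<bullet> k"
  unfolding Hc_def by (rule lin_col[OF Hr_lin])

definition "CA e s z = pol (fst s) (fst (fst z)) (snd (fst z)) * piref (fst (fst z)) (snd z) *
   sigmoid (r (snd s) (fst (fst z)) (snd (fst z)) - r (snd s) (fst (fst z)) (snd z)) *
   ((Dr (snd s) (fst (fst z)) (snd (fst z)) - Dr (snd s) (fst (fst z)) (snd z)) \<bullet> e)"
definition "DCA e s z = ((piref (fst (fst z)) (snd z) *
      sigmoid (r (snd s) (fst (fst z)) (snd (fst z)) - r (snd s) (fst (fst z)) (snd z)) *
      ((Dr (snd s) (fst (fst z)) (snd (fst z)) - Dr (snd s) (fst (fst z)) (snd z)) \<bullet> e))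
      *\<^sub>R Dp (fst s) (fst (fst z)) (snd (fst z)),
   (pol (fst s) (fst (fst z)) (snd (fst z)) * piref (fst (fst z)) (snd z) *
      (sigmoid (r (snd s) (fst (fst z)) (snd (fst z)) - r (snd s) (fst (fst z)) (snd z)) *
       (1 - sigmoid (r (snd s) (fst (fst z)) (snd (fst z)) - r (snd s) (fst (fst z)) (snd z)))) *
      ((Dr (snd s) (fst (fst z)) (snd (fst z)) - Dr (snd s) (fst (fst z)) (snd z)) \<bullet> e))
      *\<^sub>R (Dr (snd s) (fst (fst z)) (snd (fst z)) - Dr (snd s) (fst (fst z)) (snd z)) +
   (pol (fst s) (fst (fst z)) (snd (fst z)) * piref (fst (fst z)) (snd z) *
      sigmoid (r (snd s) (fst (fst z)) (snd (fst z)) - r (snd s) (fst (fst z)) (snd z)))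
      *\<^sub>R (Hc (snd s) (fst (fst z)) (snd (fst z)) e - Hc (snd s) (fst (fst z)) (snd z) e))"
definition "CB e s z = - (pol (fst s) (fst (fst z)) (snd (fst z)) * piref (fst (fst z)) (snd z) *
   ((Dr (snd s) (fst (fst z)) (snd (fst z)) - Dr (snd s) (fst (fst z)) (snd z)) \<bullet> e))"
definition "DCB e s z = ((- (piref (fst (fst z)) (snd z) *
      ((Dr (snd s) (fst (fst z)) (snd (fst z)) - Dr (snd s) (fst (fst z)) (snd z)) \<bullet> e)))
      *\<^sub>R Dp (fst s) (fst (fst z)) (snd (fst z)),
   (- (pol (fst s) (fst (fst z)) (snd (fst z)) * piref (fst (fst z)) (snd z)))
      *\<^sub>R (Hc (snd s) (fst (fst z)) (snd (fst z)) e - Hc (snd s) (fst (fst z)) (snd z) e))"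

lemma dCA: "fst s \<in> U0 \<Longrightarrow> ((\<lambda>s. CA e s z) has_derivative (\<lambda>h. DCA e s z \<bullet> h)) (at s)"
  unfolding CA_def
  apply (rule has_derivative_eq_rhs)
  apply (rule pol_fst r_snd Dr_snd | rule derivative_intros | assumption)+
  apply (simp add: DCA_def fun_eq_iff inner_Pair_left inner_diff_left inner_diff_right Hr_Hc algebra_simps)
  done

lemma dCB: "fst s \<in> U0 \<Longrightarrow> ((\<lambda>s. CB e s z) has_derivative (\<lambda>h. DCB e s z \<bullet> h)) (at s)"
  unfolding CB_def
  apply (rule has_derivative_eq_rhs)
  apply (rule pol_fst r_snd Dr_snd | rule derivative_intros | assumption)+
  apply (simp add: DCB_def fun_eq_iff inner_Pair_left inner_diff_left inner_diff_right Hr_Hc algebra_simps)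
  done

lemma Good_C: "Good U1 (\<lambda>s z. CA e s z + Pz z * CB e s z) (\<lambda>s z. DCA e s z + Pz z *\<^sub>R DCB e s z)"
proof (intro Good_add Good_weight[where Bb=1] Pz_meas Pz_bd)
  show "Good U1 (CA e) (DCA e)"
  proof (rule Good_cont'[OF U1_open cXYY])
    show "continuous_on (U1 \<times> UNIV) (\<lambda>w. CA e (fst w) (snd w))"
      unfolding CA_def by (intro continuous_intros) (auto simp: mem_Times_iff)
    show "continuous_on (U1 \<times> UNIV) (\<lambda>w. DCA e (fst w) (snd w))"
      unfolding DCA_def by (intro continuous_intros) (auto simp: mem_Times_iff)
    fix s :: "'t \<times> 'p" and z :: "('x \<times> 'y) \<times> 'y" assume s: "s \<in> U1"
    show "((\<lambda>s. CA e s z) has_derivative (\<lambda>h. DCA e s z \<bullet> h)) (at s)"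
      using s by (intro dCA) (auto simp: mem_Times_iff)
  qed
  show "Good U1 (CB e) (DCB e)"
  proof (rule Good_cont'[OF U1_open cXYY])
    show "continuous_on (U1 \<times> UNIV) (\<lambda>w. CB e (fst w) (snd w))"
      unfolding CB_def by (intro continuous_intros) (auto simp: mem_Times_iff)
    show "continuous_on (U1 \<times> UNIV) (\<lambda>w. DCB e (fst w) (snd w))"
      unfolding DCB_def by (intro continuous_intros) (auto simp: mem_Times_iff)
    fix s :: "'t \<times> 'p" and z :: "('x \<times> 'y) \<times> 'y" assume s: "s \<in> U1"
    show "((\<lambda>s. CB e s z) has_derivative (\<lambda>h. DCB e s z \<bullet> h)) (at s)"
      using s by (intro dCB) (auto simp: mem_Times_iff)
  qed
qed

definition "Cint e s = (\<integral>x. \<integral>y. \<integral>y'. CA e s ((x, y), y') + Pz ((x, y), y') * CB e s ((x, y), y') \<partial>\<mu> \<partial>\<mu> \<partial>PX)"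
definition "DCint e s = (\<integral>x. \<integral>y. \<integral>y'. DCA e s ((x, y), y') + Pz ((x, y), y') *\<^sub>R DCB e s ((x, y), y') \<partial>\<mu> \<partial>\<mu> \<partial>PX)"

lemma Good_Cint: "Good U1 (\<lambda>s (w::real). Cint e s) (\<lambda>s w. DCint e s)"
  using Good3[OF Good_C] unfolding Cint_def DCint_def .

lemma Cint_eq:
  assumes s: "s \<in> U1"
  shows "Cint e s = snd (DLBTi s) \<bullet> e"
proof -
  have T: "bounded_linear (\<lambda>v::'t \<times> 'p. snd v \<bullet> e)"
    by (intro bounded_linear_inner_left_comp bounded_linear_snd)
  have pt: "snd (D0 s z) \<bullet> e = CA e s z + Pz z * CB e s z" for z
    by (simp add: D0_def DLA_def DLB_def CA_def CB_def inner_add_left algebra_simps)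
  have "snd (DLBTi s) \<bullet> e = (\<integral>x. \<integral>y. \<integral>y'. snd (D0 s ((x, y), y')) \<bullet> e \<partial>\<mu> \<partial>\<mu> \<partial>PX)"
    unfolding DLBTi_def by (rule comm3[OF Good_MB(2)[OF Good_L0 s] T, symmetric])
  then show ?thesis unfolding Cint_def pt by simp
qed

definition "HcO \<phi> e = (\<Sum>i\<in>Basis. (hess \<Omega> \<phi> i \<bullet> e) *\<^sub>R i)"
definition "gc e s = Cint e s + grad \<Omega> (snd s) \<bullet> e"
definition "Dgc e s = DCint e s + (0, HcO (snd s) e)"

lemma dgc: "s \<in> U1 \<Longrightarrow> (gc e has_derivative (\<lambda>h. Dgc e s \<bullet> h)) (at s)"
proof -
  assume s: "s \<in> U1"
  have lin: "linear (hess \<Omega> \<phi>)" for \<phi> using Omega_facts(2) has_derivative_linear by blast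
  have d1: "((\<lambda>s. Cint e s) has_derivative (\<lambda>h. DCint e s \<bullet> h)) (at s)"
    using Good_deriv[OF Good_Cint s] by simp
  have d2: "((\<lambda>s. grad \<Omega> (snd s) \<bullet> e) has_derivative (\<lambda>h. hess \<Omega> (snd s) (snd h) \<bullet> e)) (at s)"
  proof -
    have d0: "((\<lambda>s. grad \<Omega> (snd s)) has_derivative (\<lambda>h. hess \<Omega> (snd s) (snd h))) (at s)"
      using has_derivative_compose[OF has_derivative_snd[OF has_derivative_ident] Omega_facts(2)] by fast
    show ?thesis by (rule has_derivative_inner_left[OF d0])
  qed
  have hc: "hess \<Omega> (snd s) (snd h) \<bullet> e = HcO (snd s) e \<bullet> snd h" for h
    unfolding HcO_def by (rule lin_col[OF lin])
  show ?thesis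
    unfolding gc_def[abs_def] Dgc_def
    by (rule has_derivative_eq_rhs[OF has_derivative_add[OF d1 d2]])
       (simp add: fun_eq_iff inner_add_left inner_Pair_left hc)
qed

lemma Dgc_cont: "continuous_on U1 (Dgc e)"
proof -
  have "continuous_on U1 (DCint e)" using Good_Dcont[OF Good_Cint] by simp
  moreover have "continuous_on U1 (\<lambda>s. HcO (snd s) e)"
    unfolding HcO_def
    by (intro continuous_intros continuous_on_compose2[OF Omega_facts(3)]) auto
  ultimately show ?thesis unfolding Dgc_def[abs_def] by (intro continuous_intros)
qed

lemma Gf_comp: "s \<in> U1 \<Longrightarrow> Gf (fst s) (snd s) \<bullet> e = gc e s"
  unfolding Gf_def gc_def by (simp add: Cint_eq inner_add_left)

end



context rl begin

definition "s0 = (\<theta>, phistar \<theta>)"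
definition "PhiL s h = (fst h, \<Sum>e\<in>Basis. (Dgc e s \<bullet> h) *\<^sub>R e)"
definition "Phi' s = Blinfun (PhiL s)"
definition "Phi s = (fst s, Gf (fst s) (snd s))"

lemma s0_U1: "s0 \<in> U1" using theta_int by (simp add: s0_def)

lemma PhiL_bl: "bounded_linear (PhiL s)"
  unfolding PhiL_def[abs_def]
  by (intro bounded_linear_Pair bounded_linear_fst bounded_linear_sum
      bounded_linear_compose[OF bounded_linear_scaleR_left] bounded_linear_inner_right)

lemma Phi'_apply: "blinfun_apply (Phi' s) = PhiL s"
  unfolding Phi'_def by (rule bounded_linear_Blinfun_apply[OF PhiL_bl])

lemma Phi_eq: "s \<in> U1 \<Longrightarrow> Phi s = (fst s, \<Sum>e\<in>Basis. gc e s *\<^sub>R e)"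
  unfolding Phi_def using euclidean_representation[of "Gf (fst s) (snd s)"] by (simp add: Gf_comp)

lemma dPhi: "s \<in> U1 \<Longrightarrow> (Phi has_derivative blinfun_apply (Phi' s)) (at s)"
proof -
  assume s: "s \<in> U1"
  have "((\<lambda>s. (fst s, \<Sum>e\<in>Basis. gc e s *\<^sub>R e)) has_derivative PhiL s) (at s)"
    unfolding PhiL_def[abs_def]
    by (intro has_derivative_Pair has_derivative_fst[OF has_derivative_ident] has_derivative_sum
        has_derivative_scaleR_left dgc s)
  then show ?thesis unfolding Phi'_apply
    by (rule has_derivative_transform_within_open[OF _ U1_open s]) (simp add: Phi_eq)
qed

lemma Phi'_cont: "continuous_on U1 Phi'"
proof (rule continuous_on_blinfun_componentwise)
  fix i :: "'t \<times> 'p"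
  show "continuous_on U1 (\<lambda>s. blinfun_apply (Phi' s) i)"
    unfolding Phi'_apply PhiL_def
    by (intro continuous_intros continuous_on_inner[OF Dgc_cont]) 
qed

lemma theta_Theta: "\<theta> \<in> \<Theta>" using theta_int interior_subset by blast

lemma Gf_zero: "Gf \<theta> (phistar \<theta>) = 0"
proof -
  have "(\<lambda>k. Gf \<theta> (phistar \<theta>) \<bullet> k) = (\<lambda>v. 0)"
    by (rule differential_zero_maxmin[of "phistar \<theta>" UNIV "LBT PX \<mu> pol piref Pstar r \<Omega> \<theta>"])
       (use dLBT_phi[OF theta_int] phistar_min[OF theta_Theta] in auto)
  then have "Gf \<theta> (phistar \<theta>) \<bullet> Gf \<theta> (phistar \<theta>) = 0" by metis
  then show ?thesis by simp
qed

lemma Phi_s0: "Phi s0 = (\<theta>, 0)"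
  by (simp add: Phi_def s0_def Gf_zero)

definition "Gt h = (\<Sum>e\<in>Basis. (Dgc e s0 \<bullet> (h, 0)) *\<^sub>R e)"
definition "Hm k = (\<Sum>e\<in>Basis. (Dgc e s0 \<bullet> (0, k)) *\<^sub>R e)"

lemma PhiL_s0: "PhiL s0 (h, k) = (h, Gt h + Hm k)"
proof -
  have "Dgc e s0 \<bullet> (h, k) = Dgc e s0 \<bullet> (h, 0) + Dgc e s0 \<bullet> (0, k)" for e
    by (cases "Dgc e s0") simp
  then show ?thesis
    by (simp add: PhiL_def Gt_def Hm_def scaleR_add_left sum.distrib)
qed

lemma Gt_bl: "bounded_linear Gt"
  unfolding Gt_def[abs_def]
  by (intro bounded_linear_sum bounded_linear_compose[OF bounded_linear_scaleR_left]
      bounded_linear_compose[OF bounded_linear_inner_right] bounded_linear_Pair bounded_linear_ident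
      bounded_linear_zero)

lemma Hm_bl: "bounded_linear Hm"
  unfolding Hm_def[abs_def]
  by (intro bounded_linear_sum bounded_linear_compose[OF bounded_linear_scaleR_left]
      bounded_linear_compose[OF bounded_linear_inner_right] bounded_linear_Pair bounded_linear_ident
      bounded_linear_zero)

lemma dGf: "(Gf \<theta> has_derivative Hm) (at (phistar \<theta>))"
proof -
  have eq: "Gf \<theta> \<phi> = (\<Sum>e\<in>Basis. gc e (\<theta>, \<phi>) *\<^sub>R e)" for \<phi>
    using euclidean_representation[of "Gf \<theta> \<phi>"] Gf_comp[of "(\<theta>, \<phi>)"] theta_int by simp
  have dp: "((\<lambda>\<phi>. (\<theta>, \<phi>)) has_derivative (\<lambda>k. (0, k))) (at (phistar \<theta>))"
    by (auto intro!: derivative_eq_intros)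
  have "((\<lambda>\<phi>. gc e (\<theta>, \<phi>)) has_derivative (\<lambda>k. Dgc e s0 \<bullet> (0, k))) (at (phistar \<theta>))" for e
    using has_derivative_compose[OF dp dgc[OF s0_U1[unfolded s0_def]]] by (simp add: s0_def)
  then have "((\<lambda>\<phi>. \<Sum>e\<in>Basis. gc e (\<theta>, \<phi>) *\<^sub>R e) has_derivative Hm) (at (phistar \<theta>))"
    unfolding Hm_def[abs_def] by (intro has_derivative_sum has_derivative_scaleR_left)
  then show ?thesis unfolding eq[abs_def] .
qed

lemma Hm_inj: "inj Hm"
  by (rule sc_hess[OF LBT_sconv[OF theta_Theta] dLBT_phi[OF theta_int] dGf])

lemma uniq:
  assumes t: "t \<in> U0" and z: "Gf t w = 0"
  shows "phistar t = w"
proof -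
  have tT: "t \<in> \<Theta>" using t interior_subset by blast
  obtain m where m: "m > 0" and fo: "\<And>u w. LBT PX \<mu> pol piref Pstar r \<Omega> t w + Gf t w \<bullet> (u - w) + m / 2 * (norm (u - w))\<^sup>2
      \<le> LBT PX \<mu> pol piref Pstar r \<Omega> t u"
    using sc_first[OF LBT_sconv[OF tT] dLBT_phi[OF t]] by blast
  have "m / 2 * (norm (phistar t - w))\<^sup>2 \<le> 0"
    using fo[of w "phistar t"] phistar_min[OF tT, of w] z by simp
  then show ?thesis using m by (simp add: mult_le_0_iff)
qed

lemma phistar_deriv:
  obtains \<psi>' where "(phistar has_derivative \<psi>') (at \<theta>)" "\<And>h. Gt h + Hm (\<psi>' h) = 0"
proof -
  have Hlin: "linear Hm" using Hm_bl bounded_linear.linear by blast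
  obtain Li where Li: "linear Li" "Li \<circ> Hm = id"
    using linear_injective_left_inverse[OF Hlin Hm_inj] by blast
  have LiH: "Li (Hm k) = k" for k using Li(2) by (metis comp_apply id_apply)
  have Li_bl: "bounded_linear Li" using Li(1) linear_conv_bounded_linear by blast
  define IL where "IL v = (fst v, Li (snd v - Gt (fst v)))" for v :: "'t \<times> 'p"
  have IL_bl: "bounded_linear IL"
    unfolding IL_def[abs_def]
    by (intro bounded_linear_Pair bounded_linear_fst bounded_linear_compose[OF Li_bl]
        bounded_linear_sub bounded_linear_snd bounded_linear_compose[OF Gt_bl])
  define invf where "invf = Blinfun IL"
  have inv: "invf o\<^sub>L Phi' s0 = id_blinfun"
  proof (rule blinfun_eqI)
    fix i :: "'t \<times> 'p"
    obtain h k where i: "i = (h, k)" by (cases i)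
    show "blinfun_apply (invf o\<^sub>L Phi' s0) i = blinfun_apply id_blinfun i"
      by (simp add: i invf_def bounded_linear_Blinfun_apply[OF IL_bl] Phi'_apply PhiL_s0 IL_def LiH)
  qed
  obtain U' V ginv g' where U': "open U'" "U' \<subseteq> U1" "s0 \<in> U'" and V: "open V" "Phi s0 \<in> V"
    and hom: "homeomorphism U' V Phi ginv"
    and dg: "\<And>y. y \<in> V \<Longrightarrow> (ginv has_derivative g' y) (at y)"
    and g'eq: "\<And>y. y \<in> V \<Longrightarrow> g' y = inv (blinfun_apply (Phi' (ginv y)))"
    and bij: "\<And>y. y \<in> V \<Longrightarrow> bij (blinfun_apply (Phi' (ginv y)))"
    using inverse_function_theorem[OF U1_open dPhi Phi'_cont s0_U1 inv] by metis
  have h1: "\<And>x. x \<in> U' \<Longrightarrow> ginv (Phi x) = x" and h2: "\<And>y. y \<in> V \<Longrightarrow> Phi (ginv y) = y"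
    and h3: "ginv ` V = U'"
    using hom unfolding homeomorphism_def by auto
  have V0: "(\<theta>, 0) \<in> V" using V Phi_s0 by simp
  have g0: "ginv (\<theta>, 0) = s0" using h1[OF U'(3)] Phi_s0 by simp
  define N where "N = U0 \<inter> ((\<lambda>t. (t, 0::'p)) -` V)"
  have N: "open N" "\<theta> \<in> N"
    unfolding N_def using V0 theta_int
    by (auto intro!: open_Int open_vimage V(1) continuous_intros)
  define \<psi> where "\<psi> t = snd (ginv (t, 0))" for t
  have eqN: "phistar t = \<psi> t" if t: "t \<in> N" for t
  proof -
    have tV: "(t, 0) \<in> V" and tU: "t \<in> U0" using t by (auto simp: N_def)
    have "Phi (ginv (t, 0)) = (t, 0)" by (rule h2[OF tV])
    then have "fst (ginv (t, 0)) = t" "Gf t (\<psi> t) = 0"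
      unfolding Phi_def \<psi>_def by (auto simp: prod_eq_iff)
    then show ?thesis using uniq[OF tU] by blast
  qed
  define \<psi>' where "\<psi>' h = snd (g' (\<theta>, 0) (h, 0))" for h
  have dpair: "((\<lambda>t. (t, 0::'p)) has_derivative (\<lambda>h. (h, 0))) (at \<theta>)"
    by (auto intro!: derivative_eq_intros)
  have "((\<lambda>t. ginv (t, 0)) has_derivative (\<lambda>h. g' (\<theta>, 0) (h, 0))) (at \<theta>)"
    using has_derivative_compose[OF dpair dg[OF V0]] by simp
  then have "(\<psi> has_derivative \<psi>') (at \<theta>)"
    unfolding \<psi>_def[abs_def] \<psi>'_def[abs_def] by (rule has_derivative_snd)
  then have d: "(phistar has_derivative \<psi>') (at \<theta>)"
    by (rule has_derivative_transform_within_open[OF _ N]) (simp add: eqN)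
  have bij0: "bij (PhiL s0)" using bij[OF V0] by (simp add: g0 Phi'_apply)
  have g'0: "g' (\<theta>, 0) = inv (PhiL s0)" using g'eq[OF V0] by (simp add: g0 Phi'_apply)
  have pk: "Gt h + Hm (\<psi>' h) = 0" for h
  proof -
    define v where "v = inv (PhiL s0) (h, 0)"
    have "PhiL s0 v = (h, 0)" unfolding v_def using bij0 by (simp add: bij_is_surj surj_f_inv_f)
    moreover have "PhiL s0 v = (fst v, Gt (fst v) + Hm (snd v))" using PhiL_s0[of "fst v" "snd v"] by simp
    ultimately have "fst v = h" "Gt h + Hm (snd v) = 0" by auto
    then show ?thesis by (simp add: \<psi>'_def g'0 v_def)
  qed
  show ?thesis using that d pk by blast
qed

end



context rl begin

lemma Good2:
  fixes L :: "'a::euclidean_space \<Rightarrow> 'x \<times> 'y \<Rightarrow> real"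
  assumes G: "Good U L D"
  shows "Good U (\<lambda>s (w::real). \<integral>x. \<integral>y. L s (x, y) \<partial>\<mu> \<partial>PX) (\<lambda>s w. \<integral>x. \<integral>y. D s (x, y) \<partial>\<mu> \<partial>PX)"
proof -
  have G1: "Good U (\<lambda>s x. \<integral>y. L s (x, y) \<partial>\<mu>) (\<lambda>s x. \<integral>y. D s (x, y) \<partial>\<mu>)"
    by (rule Good_int[OF G mu_fin mu_sets])
  show ?thesis
    using Good_int[OF Good_dummy[OF G1, where 'w=real] PX_fin PX_sets] by simp
qed

definition "Kf t z = pol t (fst z) (snd z) * ln (pol t (fst z) (snd z) / piref (fst z) (snd z))"
definition "DK t z = (ln (pol t (fst z) (snd z) / piref (fst z) (snd z)) + 1) *\<^sub>R Dp t (fst z) (snd z)"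
definition "Af s z = pol (fst s) (fst z) (snd z) * r (snd s) (fst z) (snd z)"
definition "DAf s z = (r (snd s) (fst z) (snd z) *\<^sub>R Dp (fst s) (fst z) (snd z),
                      pol (fst s) (fst z) (snd z) *\<^sub>R Dr (snd s) (fst z) (snd z))"

lemma pol_ne [simp]: "pol t x y \<noteq> 0" using pi_pos[of t x y] by simp
lemma piref_ne [simp]: "piref x y \<noteq> 0" using piref_pos[of x y] by simp

lemma Kf_alt: "(\<lambda>t. Kf t z) = (\<lambda>t. pol t (fst z) (snd z) * (ln (pol t (fst z) (snd z)) - ln (piref (fst z) (snd z))))"
  unfolding Kf_def using pi_pos piref_pos by (simp add: ln_div fun_eq_iff)

lemma dKf: "t \<in> U0 \<Longrightarrow> ((\<lambda>t. Kf t z) has_derivative (\<lambda>h. DK t z \<bullet> h)) (at t)"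
  unfolding Kf_alt
  apply (insert pi_pos[of t "fst z" "snd z"] piref_pos[of "fst z" "snd z"])
  apply (rule has_derivative_eq_rhs)
  apply (rule pol_facts(1) | rule derivative_intros | assumption)+
  apply (simp_all add: DK_def fun_eq_iff algebra_simps ln_div)
  done

lemma dAf: "fst s \<in> U0 \<Longrightarrow> ((\<lambda>s. Af s z) has_derivative (\<lambda>h. DAf s z \<bullet> h)) (at s)"
  unfolding Af_def
  apply (rule has_derivative_eq_rhs)
  apply (rule pol_fst r_snd | rule derivative_intros | assumption)+
  apply (simp add: DAf_def fun_eq_iff inner_Pair_left algebra_simps)
  done

lemma Good_K: "Good U0 Kf DK"
proof (rule Good_cont'[OF U0_open XY_compact])
  show "continuous_on (U0 \<times> UNIV) (\<lambda>w. Kf (fst w) (snd w))"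
    unfolding Kf_def using pi_pos piref_pos
    by (intro continuous_intros) (auto simp: mem_Times_iff)
  show "continuous_on (U0 \<times> UNIV) (\<lambda>w. DK (fst w) (snd w))"
    unfolding DK_def using pi_pos piref_pos
    by (intro continuous_intros) (auto simp: mem_Times_iff)
qed (rule dKf)

lemma Good_A: "Good U1 Af DAf"
proof (rule Good_cont'[OF U1_open XY_compact])
  show "continuous_on (U1 \<times> UNIV) (\<lambda>w. Af (fst w) (snd w))"
    unfolding Af_def by (intro continuous_intros) (auto simp: mem_Times_iff)
  show "continuous_on (U1 \<times> UNIV) (\<lambda>w. DAf (fst w) (snd w))"
    unfolding DAf_def by (intro continuous_intros) (auto simp: mem_Times_iff)
qed (auto intro: dAf simp: mem_Times_iff)

definition "Ki t = (\<integral>x. \<integral>y. Kf t (x, y) \<partial>\<mu> \<partial>PX)"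
definition "DKi t = (\<integral>x. \<integral>y. DK t (x, y) \<partial>\<mu> \<partial>PX)"
definition "Ai s = (\<integral>x. \<integral>y. Af s (x, y) \<partial>\<mu> \<partial>PX)"
definition "DAi s = (\<integral>x. \<integral>y. DAf s (x, y) \<partial>\<mu> \<partial>PX)"

lemma dKi: "t \<in> U0 \<Longrightarrow> (Ki has_derivative (\<lambda>h. DKi t \<bullet> h)) (at t)"
  using Good_deriv[OF Good2[OF Good_K]] unfolding Ki_def[abs_def] DKi_def by simp

lemma dAi: "s \<in> U1 \<Longrightarrow> (Ai has_derivative (\<lambda>h. DAi s \<bullet> h)) (at s)"
  using Good_deriv[OF Good2[OF Good_A]] unfolding Ai_def[abs_def] DAi_def by simp

lemma Jobj_eq:
  assumes t: "t \<in> U0"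
  shows "Jobj PX \<mu> pol piref \<beta> r t \<phi> = Ai (t, \<phi>) - \<beta> * Ki t"
proof -
  have m1: "MB (\<lambda>x. \<integral>y. Af (t, \<phi>) (x, y) \<partial>\<mu>)"
    by (rule MB_int[OF Good_MB(1)[OF Good_A] mu_fin mu_sets]) (use t in auto)
  have m2: "MB (\<lambda>x. \<integral>y. Kf t (x, y) \<partial>\<mu>)"
    by (rule MB_int[OF Good_MB(1)[OF Good_K t] mu_fin mu_sets])
  have i1: "integrable PX (\<lambda>x. \<integral>y. Af (t, \<phi>) (x, y) \<partial>\<mu>)" by (rule MB_integrable1[OF m1 PX_fin PX_sets])
  have i2: "integrable PX (\<lambda>x. \<integral>y. Kf t (x, y) \<partial>\<mu>)" by (rule MB_integrable1[OF m2 PX_fin PX_sets])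
  have "Jobj PX \<mu> pol piref \<beta> r t \<phi> = (\<integral>x. (\<integral>y. Af (t, \<phi>) (x, y) \<partial>\<mu>) - \<beta> * (\<integral>y. Kf t (x, y) \<partial>\<mu>) \<partial>PX)"
    unfolding Jobj_def KL_def Af_def Kf_def by simp
  also have "\<dots> = Ai (t, \<phi>) - \<beta> * Ki t"
    using i1 i2 unfolding Ai_def Ki_def by simp
  finally show ?thesis .
qed

lemma F_deriv:
  obtains \<psi>' where "((\<lambda>t. Jobj PX \<mu> pol piref \<beta> r t (phistar t)) has_derivative
       (\<lambda>h. DAi s0 \<bullet> (h, \<psi>' h) - \<beta> * (DKi \<theta> \<bullet> h))) (at \<theta>)" "\<And>h. Gt h + Hm (\<psi>' h) = 0"
proof -
  obtain \<psi>' where d: "(phistar has_derivative \<psi>') (at \<theta>)" and p: "\<And>h. Gt h + Hm (\<psi>' h) = 0"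
    using phistar_deriv by blast
  have dp: "((\<lambda>t. (t, phistar t)) has_derivative (\<lambda>h. (h, \<psi>' h))) (at \<theta>)"
    by (intro has_derivative_Pair has_derivative_ident d)
  have "((\<lambda>t. Ai (t, phistar t)) has_derivative (\<lambda>h. DAi s0 \<bullet> (h, \<psi>' h))) (at \<theta>)"
    using has_derivative_compose[OF dp dAi[OF s0_U1[unfolded s0_def]]] by (simp add: s0_def)
  then have "((\<lambda>t. Ai (t, phistar t) - \<beta> * Ki t) has_derivative (\<lambda>h. DAi s0 \<bullet> (h, \<psi>' h) - \<beta> * (DKi \<theta> \<bullet> h))) (at \<theta>)"
    by (intro has_derivative_diff has_derivative_mult_right dKi theta_int)
  then have "((\<lambda>t. Jobj PX \<mu> pol piref \<beta> r t (phistar t)) has_derivative (\<lambda>h. DAi s0 \<bullet> (h, \<psi>' h) - \<beta> * (DKi \<theta> \<bullet> h))) (at \<theta>)"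
    by (rule has_derivative_transform_within_open[OF _ U0_open theta_int]) (simp add: Jobj_eq)
  then show ?thesis using that p by blast
qed

lemma Ki_deriv: "((\<lambda>t. \<integral>x. KL \<mu> pol piref t x \<partial>PX) has_derivative (\<lambda>h. DKi \<theta> \<bullet> h)) (at \<theta>)"
proof -
  have "(\<lambda>t. \<integral>x. KL \<mu> pol piref t x \<partial>PX) = Ki" unfolding Ki_def KL_def Kf_def by simp
  then show ?thesis using dKi[OF theta_int] by simp
qed

end



context rl begin

lemma gl_eq: "grad (\<lambda>t. ln (pol t x y)) \<theta> = (1 / pol \<theta> x y) *\<^sub>R Dp \<theta> x y"
proof (rule grad_unique)
  have "((\<lambda>t. ln (pol t x y)) has_derivative (\<lambda>h. (Dp \<theta> x y \<bullet> h) * inverse (pol \<theta> x y))) (at \<theta>)"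
    by (rule derivative_intros pol_facts(1) theta_int pi_pos)+
  then show "((\<lambda>t. ln (pol t x y)) has_derivative (\<lambda>h. ((1 / pol \<theta> x y) *\<^sub>R Dp \<theta> x y) \<bullet> h)) (at \<theta>)"
    by (rule has_derivative_eq_rhs) (simp add: fun_eq_iff field_simps)
qed

lemma grad_lBT: "grad (lBT Pstar r x y y') \<phi> = (sigmoid (r \<phi> x y - r \<phi> x y') - Pstar x y y') *\<^sub>R (Dr \<phi> x y - Dr \<phi> x y')"
proof (rule grad_unique)
  have e: "lBT Pstar r x y y' = (\<lambda>\<phi>. sp (r \<phi> x y - r \<phi> x y') - Pstar x y y' * (r \<phi> x y - r \<phi> x y'))"
    by (simp add: fun_eq_iff lBT_alt[OF Pstar_compl])
  show "(lBT Pstar r x y y' has_derivative (\<lambda>h. ((sigmoid (r \<phi> x y - r \<phi> x y') - Pstar x y y') *\<^sub>R (Dr \<phi> x y - Dr \<phi> x y')) \<bullet> h)) (at \<phi>)"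
    unfolding e
    apply (rule has_derivative_eq_rhs)
    apply (rule r_facts(1) | rule derivative_intros)+
    apply (simp add: fun_eq_iff inner_diff_left algebra_simps)
    done
qed

lemma grad_LBT: "grad (LBT PX \<mu> pol piref Pstar r \<Omega> \<theta>) = Gf \<theta>"
  by (rule ext, rule grad_unique, rule dLBT_phi[OF theta_int])

lemma hess_LBT: "hess (LBT PX \<mu> pol piref Pstar r \<Omega> \<theta>) (phistar \<theta>) = Hm"
  unfolding hess_def grad_LBT using frechet_derivative_at[OF dGf] by simp

definition "Hinv = inv Hm"

lemma Hinv_bl: "bounded_linear Hinv"
  unfolding Hinv_def by (rule inj_linear_imp_inv_bounded_linear[OF Hm_bl Hm_inj])

lemma Hinv_Hm: "Hinv (Hm k) = k"
  unfolding Hinv_def by (rule inv_f_f[OF Hm_inj])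

definition "gb = gbar PX \<mu> pol r phistar \<theta>"
definition "T0 v = gb \<bullet> Hinv v"

lemma T0_bl: "bounded_linear T0"
  unfolding T0_def[abs_def] by (intro bounded_linear_compose[OF bounded_linear_inner_right Hinv_bl])

lemma infl_eq: "gb \<bullet> infl PX \<mu> pol piref Pstar r \<Omega> phistar \<theta> x y y' =
   - ((sigmoid (r (phistar \<theta>) x y - r (phistar \<theta>) x y') - Pstar x y y') * T0 (Dr (phistar \<theta>) x y - Dr (phistar \<theta>) x y'))"
proof -
  have l: "linear Hinv" using Hinv_bl bounded_linear.linear by blast
  show ?thesis
    unfolding infl_def hess_LBT grad_lBT Hinv_def[symmetric] T0_def
    by (simp add: linear_scale[OF l] inner_minus_right)
qed

lemma psi_eq: assumes "Gt h + Hm k = 0" shows "k = - Hinv (Gt h)"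
proof -
  have "Hm k = - Gt h" using assms by (simp add: eq_neg_iff_add_eq_0 add.commute)
  then have "Hinv (Hm k) = Hinv (- Gt h)" by simp
  then show ?thesis using Hinv_Hm linear_neg[OF bounded_linear.linear[OF Hinv_bl]] by simp
qed

lemma gb_eq: "gb = snd (DAi s0)"
proof -
  have "snd (DAi s0) = (\<integral>x. \<integral>y. snd (DAf s0 (x, y)) \<partial>\<mu> \<partial>PX)"
    unfolding DAi_def by (rule comm2[OF Good_MB(2)[OF Good_A s0_U1] bounded_linear_snd, symmetric])
  then show ?thesis by (simp add: gb_def gbar_def DAf_def s0_def Dr_def)
qed

lemma fstDAi: "fst (DAi s0) \<bullet> h = (\<integral>x. \<integral>y. r (phistar \<theta>) x y * (Dp \<theta> x y \<bullet> h) \<partial>\<mu> \<partial>PX)"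
proof -
  have T: "bounded_linear (\<lambda>v::'t \<times> 'p. fst v \<bullet> h)"
    by (intro bounded_linear_inner_left_comp bounded_linear_fst)
  have "fst (DAi s0) \<bullet> h = (\<integral>x. \<integral>y. fst (DAf s0 (x, y)) \<bullet> h \<partial>\<mu> \<partial>PX)"
    unfolding DAi_def by (rule comm2[OF Good_MB(2)[OF Good_A s0_U1] T, symmetric])
  then show ?thesis by (simp add: DAf_def s0_def)
qed

abbreviation "\<phi>0 \<equiv> phistar \<theta>"

definition "sg z = sigmoid (r \<phi>0 (fst (fst z)) (snd (fst z)) - r \<phi>0 (fst (fst z)) (snd z)) - Pz z"
definition "Dd0 z = Dr \<phi>0 (fst (fst z)) (snd (fst z)) - Dr \<phi>0 (fst (fst z)) (snd z)"
definition "q h z = piref (fst (fst z)) (snd z) * sg z * (Dp \<theta> (fst (fst z)) (snd (fst z)) \<bullet> h)"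

lemma MB_Pz: "MB (\<lambda>z. - Pz z)"
  unfolding MB_def using Pz_meas Pz_bd by auto

lemma MB_sg: "MB sg"
proof -
  have "MB (\<lambda>z::('x \<times> 'y) \<times> 'y. sigmoid (r \<phi>0 (fst (fst z)) (snd (fst z)) - r \<phi>0 (fst (fst z)) (snd z)))"
    by (intro MB_cont cXYY continuous_intros)
  from MB_add[OF this MB_Pz] show ?thesis unfolding sg_def[abs_def] by simp
qed

lemma MB_Dd0: "MB Dd0"
  unfolding Dd0_def[abs_def] by (intro MB_cont cXYY continuous_intros)

lemma MB_q: "MB (q h)"
proof -
  have a: "MB (\<lambda>z::('x \<times> 'y) \<times> 'y. piref (fst (fst z)) (snd z))"
    by (intro MB_cont cXYY continuous_intros)
  have b: "MB (\<lambda>z::('x \<times> 'y) \<times> 'y. Dp \<theta> (fst (fst z)) (snd (fst z)) \<bullet> h)"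
    by (intro MB_cont cXYY continuous_intros) (use theta_int in auto)
  show ?thesis unfolding q_def[abs_def] by (intro MB_mult a b MB_sg)
qed

lemma MB_V: "MB (\<lambda>z. q h z *\<^sub>R Dd0 z)"
  by (intro MB_scaleR MB_q MB_Dd0)

lemma Gt_eq: "Gt h = (\<integral>x. \<integral>y. \<integral>y'. q h ((x, y), y') *\<^sub>R Dd0 ((x, y), y') \<partial>\<mu> \<partial>\<mu> \<partial>PX)"
  (is "_ = ?V")
proof -
  have comp: "Dgc e s0 \<bullet> (h, 0) = ?V \<bullet> e" for e
  proof -
    have T: "bounded_linear (\<lambda>v::'t \<times> 'p. fst v \<bullet> h)"
      by (intro bounded_linear_inner_left_comp bounded_linear_fst)
    have T2: "bounded_linear (\<lambda>v::'p. v \<bullet> e)" by (rule bounded_linear_inner_left)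
    have "Dgc e s0 \<bullet> (h, 0) = fst (DCint e s0) \<bullet> h"
      by (cases "DCint e s0") (simp add: Dgc_def)
    also have "\<dots> = (\<integral>x. \<integral>y. \<integral>y'. fst (DCA e s0 ((x, y), y') + Pz ((x, y), y') *\<^sub>R DCB e s0 ((x, y), y')) \<bullet> h \<partial>\<mu> \<partial>\<mu> \<partial>PX)"
      unfolding DCint_def by (rule comm3[OF Good_MB(2)[OF Good_C s0_U1] T, symmetric])
    also have "\<dots> = (\<integral>x. \<integral>y. \<integral>y'. (q h ((x, y), y') *\<^sub>R Dd0 ((x, y), y')) \<bullet> e \<partial>\<mu> \<partial>\<mu> \<partial>PX)"
      by (simp add: DCA_def DCB_def q_def sg_def Dd0_def s0_def algebra_simps inner_diff_left)
    also have "\<dots> = ?V \<bullet> e"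
      by (rule comm3[OF MB_V T2])
    finally show ?thesis .
  qed
  have "Gt h = (\<Sum>e\<in>Basis. (?V \<bullet> e) *\<^sub>R e)" unfolding Gt_def comp ..
  also have "\<dots> = ?V" by (rule euclidean_representation)
  finally show ?thesis .
qed

lemma T0_Gt: "T0 (Gt h) = (\<integral>x. \<integral>y. \<integral>y'. q h ((x, y), y') * T0 (Dd0 ((x, y), y')) \<partial>\<mu> \<partial>\<mu> \<partial>PX)"
proof -
  have l: "linear T0" using T0_bl bounded_linear.linear by blast
  have "T0 (Gt h) = (\<integral>x. \<integral>y. \<integral>y'. T0 (q h ((x, y), y') *\<^sub>R Dd0 ((x, y), y')) \<partial>\<mu> \<partial>\<mu> \<partial>PX)"
    unfolding Gt_eq by (rule comm3[OF MB_V T0_bl, symmetric])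
  then show ?thesis by (simp add: linear_scale[OF l])
qed

lemma MB_uminus:
  fixes f :: "'z::topological_space \<Rightarrow> 'b::{real_normed_vector, second_countable_topology}"
  shows "MB f \<Longrightarrow> MB (\<lambda>z. - f z)"
  unfolding MB_def by auto

lemma int2_add:
  fixes f g :: "'x \<times> 'y \<Rightarrow> real"
  assumes f: "MB f" and g: "MB g"
  shows "(\<integral>x. \<integral>y. f (x, y) + g (x, y) \<partial>\<mu> \<partial>PX) = (\<integral>x. \<integral>y. f (x, y) \<partial>\<mu> \<partial>PX) + (\<integral>x. \<integral>y. g (x, y) \<partial>\<mu> \<partial>PX)"
proof -
  have "(\<integral>x. \<integral>y. f (x, y) + g (x, y) \<partial>\<mu> \<partial>PX) = (\<integral>x. (\<integral>y. f (x, y) \<partial>\<mu>) + (\<integral>y. g (x, y) \<partial>\<mu>) \<partial>PX)"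
    using MB_integrable[OF f mu_fin mu_sets] MB_integrable[OF g mu_fin mu_sets] by simp
  also have "\<dots> = (\<integral>x. \<integral>y. f (x, y) \<partial>\<mu> \<partial>PX) + (\<integral>x. \<integral>y. g (x, y) \<partial>\<mu> \<partial>PX)"
    using MB_integrable1[OF MB_int[OF f mu_fin mu_sets] PX_fin PX_sets]
      MB_integrable1[OF MB_int[OF g mu_fin mu_sets] PX_fin PX_sets] by simp
  finally show ?thesis .
qed

definition "R2 x y = (\<integral>y'. - (piref x y' * ((sigmoid (r \<phi>0 x y - r \<phi>0 x y') - Pstar x y y') *
     T0 (Dr \<phi>0 x y - Dr \<phi>0 x y'))) \<partial>\<mu>)"

lemma rt_eq: "rtilde PX \<mu> pol piref Pstar r \<Omega> phistar \<theta> x y = r \<phi>0 x y + R2 x y"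
  unfolding rtilde_def gb_def[symmetric] infl_eq R2_def by simp

lemma MB_R2: "MB (\<lambda>w. R2 (fst w) (snd w))"
proof -
  have a: "MB (\<lambda>z::('x \<times> 'y) \<times> 'y. piref (fst (fst z)) (snd z))"
    by (intro MB_cont cXYY continuous_intros)
  have f: "MB (\<lambda>z. - (piref (fst (fst z)) (snd z) * (sg z * T0 (Dd0 z))))"
    by (intro MB_uminus MB_mult a MB_sg MB_lin[OF T0_bl MB_Dd0])
  from MB_int[OF f mu_fin mu_sets] show ?thesis
    by (simp add: R2_def sg_def Pz_def Dd0_def case_prod_beta')
qed

lemma main_eq:
  assumes p: "Gt h + Hm k = 0"
  shows "DAi s0 \<bullet> (h, k) = (\<integral>x. \<integral>y. (pol \<theta> x y * rtilde PX \<mu> pol piref Pstar r \<Omega> phistar \<theta> x y)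
            *\<^sub>R grad (\<lambda>t. ln (pol t x y)) \<theta> \<partial>\<mu> \<partial>PX) \<bullet> h"
proof -
  have r0: "MB (\<lambda>w::'x \<times> 'y. r \<phi>0 (fst w) (snd w))" by (intro MB_cont XY_compact continuous_intros)
  have dp: "MB (\<lambda>w::'x \<times> 'y. Dp \<theta> (fst w) (snd w))"
    by (intro MB_cont XY_compact continuous_intros) (use theta_int in auto)
  have dph: "MB (\<lambda>w::'x \<times> 'y. Dp \<theta> (fst w) (snd w) \<bullet> h)"
    by (intro MB_cont XY_compact continuous_intros) (use theta_int in auto)
  have Th: "bounded_linear (\<lambda>v::'t. v \<bullet> h)" by (rule bounded_linear_inner_left)
  have "DAi s0 \<bullet> (h, k) = fst (DAi s0) \<bullet> h + snd (DAi s0) \<bullet> k"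
    by (cases "DAi s0") simp
  also have "\<dots> = (\<integral>x. \<integral>y. r \<phi>0 x y * (Dp \<theta> x y \<bullet> h) \<partial>\<mu> \<partial>PX) - T0 (Gt h)"
    unfolding fstDAi gb_eq[symmetric] psi_eq[OF p] T0_def by simp
  also have "\<dots> = (\<integral>x. \<integral>y. r \<phi>0 x y * (Dp \<theta> x y \<bullet> h) \<partial>\<mu> \<partial>PX) +
      (\<integral>x. \<integral>y. R2 x y * (Dp \<theta> x y \<bullet> h) \<partial>\<mu> \<partial>PX)"
  proof -
    have "R2 x y * (Dp \<theta> x y \<bullet> h) = (\<integral>y'. - (q h ((x, y), y') * T0 (Dd0 ((x, y), y'))) \<partial>\<mu>)" for x y
      unfolding R2_def integral_mult_left_zero[symmetric]
      by (simp add: q_def sg_def Pz_def Dd0_def algebra_simps)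
    then have "(\<integral>x. \<integral>y. R2 x y * (Dp \<theta> x y \<bullet> h) \<partial>\<mu> \<partial>PX) = - T0 (Gt h)"
      unfolding T0_Gt by simp
    then show ?thesis by simp
  qed
  also have "\<dots> = (\<integral>x. \<integral>y. (r \<phi>0 x y + R2 x y) * (Dp \<theta> x y \<bullet> h) \<partial>\<mu> \<partial>PX)"
    using int2_add[OF MB_mult[OF r0 dph] MB_mult[OF MB_R2 dph]] by (simp add: algebra_simps)
  also have "\<dots> = (\<integral>x. \<integral>y. ((r \<phi>0 x y + R2 x y) *\<^sub>R Dp \<theta> x y) \<bullet> h \<partial>\<mu> \<partial>PX)" by simp
  also have "\<dots> = (\<integral>x. \<integral>y. (r \<phi>0 x y + R2 x y) *\<^sub>R Dp \<theta> x y \<partial>\<mu> \<partial>PX) \<bullet> h"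
    using comm2[OF MB_scaleR[OF MB_add[OF r0 MB_R2] dp] Th] by simp
  also have "\<dots> = (\<integral>x. \<integral>y. (pol \<theta> x y * rtilde PX \<mu> pol piref Pstar r \<Omega> phistar \<theta> x y)
            *\<^sub>R grad (\<lambda>t. ln (pol t x y)) \<theta> \<partial>\<mu> \<partial>PX) \<bullet> h"
    by (simp add: rt_eq gl_eq)
  finally show ?thesis .
qed

lemma final:
  "\<exists>gKL. ((\<lambda>t. \<integral>x. KL \<mu> pol piref t x \<partial>PX) has_derivative (\<lambda>h. gKL \<bullet> h)) (at \<theta>) \<and>
     ((\<lambda>t. Jobj PX \<mu> pol piref \<beta> r t (phistar t)) has_derivative
        (\<lambda>h. ((\<integral>x. (\<integral>y. (pol \<theta> x y * rtilde PX \<mu> pol piref Pstar r \<Omega> phistar \<theta> x y)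
                      *\<^sub>R grad (\<lambda>t. ln (pol t x y)) \<theta> \<partial>\<mu>) \<partial>PX) - \<beta> *\<^sub>R gKL) \<bullet> h)) (at \<theta>)"
proof -
  obtain \<psi>' where d: "((\<lambda>t. Jobj PX \<mu> pol piref \<beta> r t (phistar t)) has_derivative
       (\<lambda>h. DAi s0 \<bullet> (h, \<psi>' h) - \<beta> * (DKi \<theta> \<bullet> h))) (at \<theta>)" and p: "\<And>h. Gt h + Hm (\<psi>' h) = 0"
    using F_deriv by blast
  show ?thesis
  proof (intro exI[of _ "DKi \<theta>"] conjI Ki_deriv)
    show "((\<lambda>t. Jobj PX \<mu> pol piref \<beta> r t (phistar t)) has_derivative
        (\<lambda>h. ((\<integral>x. (\<integral>y. (pol \<theta> x y * rtilde PX \<mu> pol piref Pstar r \<Omega> phistar \<theta> x y)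
                      *\<^sub>R grad (\<lambda>t. ln (pol t x y)) \<theta> \<partial>\<mu>) \<partial>PX) - \<beta> *\<^sub>R DKi \<theta>) \<bullet> h)) (at \<theta>)"
      by (rule has_derivative_eq_rhs[OF d]) (simp add: fun_eq_iff main_eq[OF p] inner_diff_left)
  qed
qed

end

theorem corollary2:
  fixes PX :: "'x::{metric_space, second_countable_topology} measure"
    and \<mu> :: "'y::{metric_space, second_countable_topology} measure"
    and \<Theta> :: "'t::euclidean_space set"
    and pol :: "'t \<Rightarrow> 'x \<Rightarrow> 'y \<Rightarrow> real"
    and piref :: "'x \<Rightarrow> 'y \<Rightarrow> real"
    and r :: "'p::euclidean_space \<Rightarrow> 'x \<Rightarrow> 'y \<Rightarrow> real"
    and \<Omega> :: "'p \<Rightarrow> real"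
    and Pstar :: "'x \<Rightarrow> 'y \<Rightarrow> 'y \<Rightarrow> real"
    and phistar :: "'t \<Rightarrow> 'p"
    and \<beta> :: real
    and \<theta> :: 't
  assumes XY_compact: "compact (UNIV :: ('x \<times> 'y) set)"
    and PX_prob: "prob_space PX" and PX_sets: "sets PX = sets borel"
    and mu_sets: "sets \<mu> = sets borel"
    and Theta_compact: "compact \<Theta>"
    and pi_pos: "\<And>t x y. pol t x y > 0"
    and pi_density: "\<And>t x. t \<in> \<Theta> \<Longrightarrow> integrable \<mu> (pol t x) \<and> (\<integral>y. pol t x y \<partial>\<mu>) = 1"
    and pi_C2: "C2_param (interior \<Theta>) (\<lambda>t (x, y). pol t x y)"
    and piref_pos: "\<And>x y. piref x y > 0"
    and piref_cont: "continuous_on UNIV (\<lambda>(x, y). piref x y)"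
    and piref_density: "\<And>x. integrable \<mu> (piref x) \<and> (\<integral>y. piref x y \<partial>\<mu>) = 1"
    and beta_pos: "\<beta> > 0"
    and r_C2: "C2_param UNIV (\<lambda>\<phi> (x, y). r \<phi> x y)"
    and Omega_C2: "C2_param UNIV (\<lambda>\<phi> (_::real). \<Omega> \<phi>)"
    and Pstar_range: "\<And>x y y'. 0 \<le> Pstar x y y' \<and> Pstar x y y' \<le> 1"
    and Pstar_compl: "\<And>x y y'. Pstar x y' y = 1 - Pstar x y y'"
    and Pstar_meas: "(\<lambda>(x, y, y'). Pstar x y y') \<in> borel_measurable borel"
    and LBT_sconv: "\<And>t. t \<in> \<Theta> \<Longrightarrow> strongly_convex (LBT PX \<mu> pol piref Pstar r \<Omega> t)"
    and phistar_min: "\<And>t \<phi>. t \<in> \<Theta> \<Longrightarrow>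
          LBT PX \<mu> pol piref Pstar r \<Omega> t (phistar t) \<le> LBT PX \<mu> pol piref Pstar r \<Omega> t \<phi>"
    and theta_int: "\<theta> \<in> interior \<Theta>"
  shows "\<exists>gKL. ((\<lambda>t. \<integral>x. KL \<mu> pol piref t x \<partial>PX) has_derivative (\<lambda>h. gKL \<bullet> h)) (at \<theta>) \<and>
     ((\<lambda>t. Jobj PX \<mu> pol piref \<beta> r t (phistar t)) has_derivative
        (\<lambda>h. ((\<integral>x. (\<integral>y. (pol \<theta> x y * rtilde PX \<mu> pol piref Pstar r \<Omega> phistar \<theta> x y)
                      *\<^sub>R grad (\<lambda>t. ln (pol t x y)) \<theta> \<partial>\<mu>) \<partial>PX) - \<beta> *\<^sub>R gKL) \<bullet> h)) (at \<theta>)"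
proof -
  interpret rl PX \<mu> \<Theta> pol piref r \<Omega> Pstar phistar \<beta> \<theta>
    by (rule rl.intro) (fact assms)+
  show ?thesis by (rule final)
qed

end
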